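(* Let $P > Q \ge 1$ and $N \ge 1$ be integers. Let $\bm{A} \in \mathbb{R}^{P\times P}$ be orthogonal. For each $i = 1,\dots,N$ let $p_{i,1},\dots,p_{i,Q} > 0$, let $\bm{N}_i$ be a symmetric positive definite $(P-Q)\times(P-Q)$ matrix, and let $$\bm{E}_i = \begin{pmatrix} \operatorname{diag}(p_{i,1},\dots,p_{i,Q}) & 0 \\ 0 & \bm{N}_i\end{pmatrix}, \qquad \bm{C}_i = \bm{A}\bm{E}_i\bm{A}^{\top}.$$ Let $\bm{\alpha} \in \mathbb{R}^Q$ and $y_i = \sum_{j=1}^Q \alpha_j \sqrt{p_{i,j}}$. Let $\overline{\bm{C}} = \arg\min_{\bm{S}\in\mathcal{S}_P^{++}} \sum_{i=1}^N d_W(\bm{C}_i,\bm{S})^2$ be the Wasserstein mean of $\bm{C}_1,\dots,\bm{C}_N$. Let $\overline{\bm{Y}}\in\mathbb{R}^{P\times P}$ satisfy $\overline{\bm{Y}}\,\overline{\bm{Y}}^{\top}=\overline{\bm{C}}$ and, for each $i$, let $\bm{Y}_i \in \mathbb{R}^{P\times P}$ satisfy $\bm{Y}_i\bm{Y}_i^{\top} = \bm{C}_i$. Let $\overline{\bm{Y}}^{\top}\bm{Y}_i = \bm{U}_i\bm{\Sigma}_i\bm{V}_i^{\top}$ be a singular value decomposition, $\bm{Q}_i^* = \bm{V}_i\bm{U}_i^{\top}$, and $$\bm{v}_i = \operatorname{vec}(\bm{Y}_i\bm{Q}_i^* - \overline{\bm{Y}}) \in \mathbb{R}^{P^2}.$$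 Then there exist $\bm{\beta}\in\mathbb{R}^{P^2}$ and $c\in\mathbb{R}$ such that $y_i = \bm{\beta}^{\top}\bm{v}_i + c$ for all $i=1,\dots,N$.
   Context: $\mathcal{S}_P^{++}$ is the set of $P\times P$ real symmetric positive definite matrices. The Wasserstein (Bures) distance is $d_W(\bm{S},\bm{S}') = \big[\operatorname{Tr}(\bm{S}) + \operatorname{Tr}(\bm{S}') - 2\operatorname{Tr}\big((\bm{S}^{1/2}\bm{S}'\bm{S}^{1/2})^{1/2}\big)\big]^{1/2}$, where $\bm{M}^{1/2}$ denotes the symmetric positive semi-definite square root. $\operatorname{vec}(\bm{M})$ is the vector of all coefficients of the matrix $\bm{M}$. The vector $\bm{v}_i$ is the tangent-space vectorization of $\bm{C}_i$ at $\overline{\bm{C}}$ associated with the Wasserstein metric (the quotient of $\mathbb{R}^{P\times P}_*$ with the Frobenius metric by the orthogonal group). *)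

theory Defs
  imports "Jordan_Normal_Form.Matrix"
begin

definition mtrace :: "real mat \<Rightarrow> real" where
  "mtrace A = (\<Sum>i<dim_row A. A $$ (i, i))"

definition sym_mat :: "real mat \<Rightarrow> bool" where
  "sym_mat A \<longleftrightarrow> transpose_mat A = A"

definition psd_mat :: "nat \<Rightarrow> real mat \<Rightarrow> bool" where
  "psd_mat n A \<longleftrightarrow> A \<in> carrier_mat n n \<and> sym_mat A \<and>
     (\<forall>v \<in> carrier_vec n. v \<bullet> (A *\<^sub>v v) \<ge> 0)"

definition pd_mat :: "nat \<Rightarrow> real mat \<Rightarrow> bool" where
  "pd_mat n A \<longleftrightarrow> A \<in> carrier_mat n n \<and> sym_mat A \<and>
     (\<forall>v \<in> carrier_vec n. v \<noteq> 0\<^sub>v n \<longrightarrow> v \<bullet> (A *\<^sub>v v) > 0)"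

text \<open>The symmetric positive semi-definite square root (unique for PSD input).\<close>
definition psd_sqrt :: "real mat \<Rightarrow> real mat" where
  "psd_sqrt S = (THE M. psd_mat (dim_row S) M \<and> M * M = S)"

definition wdist :: "real mat \<Rightarrow> real mat \<Rightarrow> real" where
  "wdist S S' = sqrt (mtrace S + mtrace S'
      - 2 * mtrace (psd_sqrt (psd_sqrt S * S' * psd_sqrt S)))"

definition orth_mat :: "nat \<Rightarrow> real mat \<Rightarrow> bool" where
  "orth_mat n A \<longleftrightarrow> A \<in> carrier_mat n n \<and> A * transpose_mat A = 1\<^sub>m n
      \<and> transpose_mat A * A = 1\<^sub>m n"

text \<open>Row-major vectorization of an n x n matrix into a vector of length n*n.\<close>
definition mvec :: "real mat \<Rightarrow> real vec" where
  "mvec M = vec (dim_row M * dim_col M) (\<lambda>k. M $$ (k div dim_col M, k mod dim_col M))"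

definition block_E :: "nat \<Rightarrow> nat \<Rightarrow> (nat \<Rightarrow> real) \<Rightarrow> real mat \<Rightarrow> real mat" where
  "block_E P Q p Nm = four_block_mat
      (mat Q Q (\<lambda>(a, b). if a = b then p a else 0)) (0\<^sub>m Q (P - Q))
      (0\<^sub>m (P - Q) Q) Nm"

definition is_wasserstein_mean :: "nat \<Rightarrow> nat \<Rightarrow> (nat \<Rightarrow> real mat) \<Rightarrow> real mat \<Rightarrow> bool" where
  "is_wasserstein_mean P N C Cbar \<longleftrightarrow> pd_mat P Cbar \<and>
     (\<forall>S. pd_mat P S \<longrightarrow>
        (\<Sum>i<N. (wdist (C i) Cbar)\<^sup>2) \<le> (\<Sum>i<N. (wdist (C i) S)\<^sup>2))"

end

theory Submission
  imports Defs "Jordan_Normal_Form.Schur_Decomposition" "Jordan_Normal_Form.Determinant"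
begin


lemma mtrace_eq: "mtrace A = (\<Sum>i<dim_row A. A $$ (i,i))" by (simp add: mtrace_def)

lemma mtrace_comm:
  assumes A: "A \<in> carrier_mat n m" and B: "B \<in> carrier_mat m n"
  shows "mtrace (A * B) = mtrace (B * A)"
proof -
  have "mtrace (A * B) = (\<Sum>i<n. \<Sum>k<m. A $$ (i,k) * B $$ (k,i))"
    using A B by (simp add: mtrace_def scalar_prod_def lessThan_atLeast0)
  also have "\<dots> = (\<Sum>k<m. \<Sum>i<n. B $$ (k,i) * A $$ (i,k))"
    by (subst sum.swap) (simp add: mult.commute)
  also have "\<dots> = mtrace (B * A)"
    using A B by (simp add: mtrace_def scalar_prod_def lessThan_atLeast0)
  finally show ?thesis .
qed

lemma mtrace_add: "A \<in> carrier_mat n n \<Longrightarrow> B \<in> carrier_mat n n \<Longrightarrow> mtrace (A + B) = mtrace A + mtrace B"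
  by (simp add: mtrace_def sum.distrib)

lemma mtrace_smult: "A \<in> carrier_mat n n \<Longrightarrow> mtrace (c \<cdot>\<^sub>m A) = c * mtrace A"
  by (simp add: mtrace_def sum_distrib_left)

lemma mtrace_minus: "A \<in> carrier_mat n n \<Longrightarrow> B \<in> carrier_mat n n \<Longrightarrow> mtrace (A - B) = mtrace A - mtrace B"
  by (simp add: mtrace_def sum_subtractf)

lemma real_conj_vec[simp]: "conjugate (v :: real vec) = v"
  by (rule eq_vecI, auto)

lemma sym_matD: "sym_mat A \<Longrightarrow> A \<in> carrier_mat n n \<Longrightarrow> i < n \<Longrightarrow> j < n \<Longrightarrow> A $$ (i,j) = A $$ (j,i)"
  unfolding sym_mat_def by (metis carrier_matD index_transpose_mat(1))

lemma real_eigen: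
  assumes A: "A \<in> carrier_mat n n" and sym: "sym_mat A" and n: "n > 0"
  shows "\<exists>l v. v \<in> carrier_vec n \<and> v \<noteq> 0\<^sub>v n \<and> A *\<^sub>v v = l \<cdot>\<^sub>v v"
proof -
  let ?Ac = "map_mat complex_of_real A"
  have Ac: "?Ac \<in> carrier_mat n n" using A by auto
  from char_poly_factorized[OF Ac] obtain as where cp: "char_poly ?Ac = (\<Prod>a\<leftarrow>as. [:-a,1:])"
    and len: "length as = n" by auto
  then obtain a where a: "a \<in> set as" using n by (cases as) auto
  have "poly (char_poly ?Ac) a = 0" unfolding cp using a
    by (simp add: poly_prod_list_zero_iff)
  hence "eigenvalue ?Ac a" using eigenvalue_root_char_poly[OF Ac] by simp
  then obtain w where w: "eigenvector ?Ac w a" unfolding eigenvalue_def by auto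
  hence wc: "w \<in> carrier_vec n" "w \<noteq> 0\<^sub>v n" "?Ac *\<^sub>v w = a \<cdot>\<^sub>v w"
    unfolding eigenvector_def using Ac by auto
  have ev: "(\<Sum>j<n. of_real (A$$(i,j)) * w$j) = a * w$i" if i: "i < n" for i
  proof -
    have "(?Ac *\<^sub>v w) $ i = a * w $ i" using wc i by simp
    moreover have "(?Ac *\<^sub>v w) $ i = (\<Sum>j<n. of_real (A$$(i,j)) * w$j)"
      using i A wc(1) by (simp add: scalar_prod_def lessThan_atLeast0)
    ultimately show ?thesis by simp
  qed
  define s where "s = (\<Sum>i<n. cnj (w$i) * (\<Sum>j<n. of_real (A$$(i,j)) * w$j))"
  define r where "r = (\<Sum>i<n. cnj (w$i) * w$i)"
  have sa: "s = a * r" unfolding s_def r_def using ev by (simp add: sum_distrib_left ac_simps)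
  have "cnj s = (\<Sum>i<n. w$i * (\<Sum>j<n. of_real (A$$(i,j)) * cnj (w$j)))"
    unfolding s_def by simp
  also have "\<dots> = (\<Sum>i<n. \<Sum>j<n. w$i * of_real (A$$(i,j)) * cnj (w$j))"
    by (simp add: sum_distrib_left ac_simps)
  also have "\<dots> = (\<Sum>j<n. \<Sum>i<n. w$i * of_real (A$$(i,j)) * cnj (w$j))"
    by (rule sum.swap)
  also have "\<dots> = (\<Sum>j<n. \<Sum>i<n. cnj (w$j) * (of_real (A$$(j,i)) * w$i))"
    by (intro sum.cong refl, simp add: sym_matD[OF sym A] ac_simps)
  also have "\<dots> = s" unfolding s_def by (simp add: sum_distrib_left)
  finally have cs: "cnj s = s" .
  have r_eq: "r = of_real (\<Sum>i<n. (cmod (w$i))^2)"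
    unfolding r_def of_real_sum by (intro sum.cong refl) (metis complex_norm_square mult.commute of_real_power)
  obtain k where k: "k < n" "w $ k \<noteq> 0" using wc by (metis carrier_vecD eq_vecI index_zero_vec)
  have "(\<Sum>i<n. (cmod (w$i))^2) > 0"
  proof -
    have "(\<Sum>i<n. (cmod (w$i))^2) \<ge> (cmod (w$k))^2"
      using k by (intro member_le_sum) auto
    moreover have "(cmod (w$k))^2 > 0" using k by simp
    ultimately show ?thesis by linarith
  qed
  hence r0: "Re r > 0" "Im r = 0" unfolding r_eq by auto
  have "Im (cnj s) = Im s" using cs by simp
  hence "Im s = 0" by simp
  hence "Im a * Re r = 0" unfolding sa using r0 by simp
  hence Ima: "Im a = 0" using r0 by simp
  define l where "l = Re a"
  have al: "a = of_real l" unfolding l_def using Ima by (simp add: complex_eq_iff)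
  have "det (char_matrix ?Ac a) = 0" using eigenvalue_det[OF Ac] \<open>eigenvalue ?Ac a\<close> by simp
  moreover have "char_matrix ?Ac a = map_mat complex_of_real (char_matrix A l)"
    unfolding al char_matrix_def using A by (intro eq_matI) auto
  ultimately have "det (char_matrix A l) = 0" by (simp add: of_real_hom.hom_det)
  hence "eigenvalue A l" using eigenvalue_det[OF A] by simp
  then obtain v where "eigenvector A v l" unfolding eigenvalue_def by auto
  thus ?thesis unfolding eigenvector_def using A by auto
qed

lemma real_cscalar: "(v :: real vec) \<bullet>c w = v \<bullet> w"
  by simp

lemma real_sq_vec_ge0: "(v :: real vec) \<bullet> v \<ge> 0"
  using conjugate_square_ge_0_vec[of v] by simp

lemma real_sq_vec_eq0: "(v :: real vec) \<in> carrier_vec n \<Longrightarrow> v \<bullet> v = 0 \<longleftrightarrow> v = 0\<^sub>v n"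
  using conjugate_square_eq_0_vec[of v n] by simp

lemma orth_complete:
  assumes u: "u \<in> carrier_vec n" and uu: "u \<bullet> u = (1::real)"
  shows "\<exists>Om. orth_mat n Om \<and> col Om 0 = u"
proof -
  have u0: "u \<noteq> 0\<^sub>v n" using uu by auto
  interpret cof_vec_space n "TYPE(real)" .
  note bc = basis_completion[OF u u0]
  define b where "b = basis_completion u"
  have n0: "n > 0" using u0 u by (cases n) auto
  obtain vs where bv: "b = u # vs" using bc(6,7) n0 unfolding b_def[symmetric] by (cases b) auto
  define ws where "ws = gram_schmidt n b"
  note gs0 = gram_schmidt_result[OF bc(2) bc(4) bc(5) refl]
  have gs2: "corthogonal ws" and gs3: "set ws \<subseteq> carrier_vec n" and gs4: "length ws = length b"
    using gs0 unfolding ws_def b_def by auto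
  have hd: "hd ws = u" unfolding ws_def bv using gram_schmidt_hd[OF u, of vs] .
  have lenws: "length ws = n" using gs4 bc(6) b_def by simp
  have ws0: "ws ! 0 = u" using hd lenws n0 by (cases ws) auto
  have wsc: "ws ! i \<in> carrier_vec n" if "i < n" for i using gs3 lenws that by auto
  have orthw: "ws ! i \<bullet> ws ! j = 0 \<longleftrightarrow> i \<noteq> j" if "i < n" "j < n" for i j
    using corthogonalD[OF gs2, of i j] lenws that by simp
  define f where "f = (\<lambda>w::real vec. (1 / sqrt (w \<bullet> w)) \<cdot>\<^sub>v w)"
  define Om where "Om = mat_of_cols n (map f ws)"
  have Omc: "Om \<in> carrier_mat n n" unfolding Om_def using lenws by (metis length_map mat_of_cols_carrier(1))
  have colOm: "col Om j = f (ws ! j)" if "j < n" for j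
    unfolding Om_def using that lenws wsc[OF that] by (simp add: f_def)
  have pos: "ws ! i \<bullet> ws ! i > 0" if "i < n" for i
    using orthw[OF that that] real_sq_vec_ge0[of "ws ! i"] by linarith
  have "transpose_mat Om * Om = 1\<^sub>m n"
  proof (rule eq_matI)
    fix i j assume i: "i < dim_row (1\<^sub>m n)" and j: "j < dim_col (1\<^sub>m n)"
    hence i: "i < n" and j: "j < n" by auto
    have "(transpose_mat Om * Om) $$ (i,j) = col Om i \<bullet> col Om j"
      using Omc i j by simp
    also have "\<dots> = (1 / sqrt (ws!i \<bullet> ws!i)) * (1 / sqrt (ws!j \<bullet> ws!j)) * (ws ! i \<bullet> ws ! j)"
      unfolding colOm[OF i] colOm[OF j] f_def using wsc[OF i] wsc[OF j] by simp
    also have "\<dots> = 1\<^sub>m n $$ (i,j)"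
    proof (cases "i = j")
      case True
      have p: "ws!i \<bullet> ws!i > 0" using pos[OF i] .
      have "(1 / sqrt (ws!i \<bullet> ws!i)) * (1 / sqrt (ws!i \<bullet> ws!i)) * (ws!i \<bullet> ws!i) = 1"
        using p by (simp add: field_simps)
      thus ?thesis using True i by simp
    next
      case False thus ?thesis using orthw[OF i j] i j by simp
    qed
    finally show "(transpose_mat Om * Om) $$ (i,j) = 1\<^sub>m n $$ (i,j)" .
  qed (insert Omc, auto)
  moreover hence "Om * transpose_mat Om = 1\<^sub>m n"
    using mat_mult_left_right_inverse[of "transpose_mat Om" n Om] Omc by auto
  moreover have "col Om 0 = u" unfolding colOm[OF n0] ws0 f_def uu by simp
  ultimately show ?thesis using Omc unfolding orth_mat_def by blast
qed

lemma orth_matD: "orth_mat n Om \<Longrightarrow> Om \<in> carrier_mat n n"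
  "orth_mat n Om \<Longrightarrow> Om * transpose_mat Om = 1\<^sub>m n"
  "orth_mat n Om \<Longrightarrow> transpose_mat Om * Om = 1\<^sub>m n"
  unfolding orth_mat_def by auto

lemma spectral:
  assumes "A \<in> carrier_mat n n" "sym_mat A"
  shows "\<exists>Om D. orth_mat n Om \<and> D \<in> carrier_mat n n \<and> diagonal_mat D \<and> A = Om * D * transpose_mat Om"
  using assms
proof (induction n arbitrary: A)
  case 0
  have "A = 1\<^sub>m 0 * 0\<^sub>m 0 0 * transpose_mat (1\<^sub>m 0)"
    by (rule eq_matI) (insert 0, auto)
  moreover have "orth_mat 0 (1\<^sub>m 0)" by (simp add: orth_mat_def)
  moreover have "diagonal_mat (0\<^sub>m 0 0 :: real mat)" by (simp add: diagonal_mat_def)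
  moreover have "(0\<^sub>m 0 0 :: real mat) \<in> carrier_mat 0 0" by simp
  ultimately show ?case by blast
next
  case (Suc m A)
  define n where "n = Suc m"
  have A: "A \<in> carrier_mat n n" and sym: "sym_mat A" using Suc n_def by auto
  obtain l v where v: "v \<in> carrier_vec n" "v \<noteq> 0\<^sub>v n" "A *\<^sub>v v = l \<cdot>\<^sub>v v"
    using real_eigen[OF A sym] n_def by auto
  define c where "c = 1 / sqrt (v \<bullet> v)"
  define u where "u = c \<cdot>\<^sub>v v"
  have vpos: "v \<bullet> v > 0" using real_sq_vec_ge0[of v] real_sq_vec_eq0[OF v(1)] v(2) by linarith
  have u: "u \<in> carrier_vec n" unfolding u_def using v by simp
  have uu: "u \<bullet> u = 1" unfolding u_def c_def using v(1) vpos by (simp add: field_simps)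
  have Au: "A *\<^sub>v u = l \<cdot>\<^sub>v u" unfolding u_def using mult_mat_vec[OF A v(1)] v(3)
    by (simp add: smult_smult_assoc mult.commute)
  obtain O1 where O1: "orth_mat n O1" and cO1: "col O1 0 = u" using orth_complete[OF u uu] by blast
  have O1c: "O1 \<in> carrier_mat n n" and O1a: "O1 * transpose_mat O1 = 1\<^sub>m n"
    and O1b: "transpose_mat O1 * O1 = 1\<^sub>m n" using orth_matD[OF O1] by auto
  have O1tc: "transpose_mat O1 \<in> carrier_mat n n" using O1c by simp
  define A' where "A' = transpose_mat O1 * A * O1"
  have A'c: "A' \<in> carrier_mat n n" unfolding A'_def using O1c A by simp
  have Tu: "transpose_mat O1 *\<^sub>v u = unit_vec n 0"
  proof -
    have "transpose_mat O1 *\<^sub>v u = col (transpose_mat O1 * O1) 0"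
      using O1c n_def cO1 by (subst col_mult2) auto
    thus ?thesis using O1b n_def by simp
  qed
  have colA': "col A' 0 = l \<cdot>\<^sub>v unit_vec n 0"
  proof -
    have "col A' 0 = (transpose_mat O1 * A) *\<^sub>v u"
      unfolding A'_def using O1c A n_def cO1 by (subst col_mult2) auto
    also have "\<dots> = transpose_mat O1 *\<^sub>v (l \<cdot>\<^sub>v u)" using O1tc A u Au by simp
    also have "\<dots> = l \<cdot>\<^sub>v unit_vec n 0" using mult_mat_vec[OF O1tc u] Tu by simp
    finally show ?thesis .
  qed
  have A'i0: "A' $$ (i,0) = (if i = 0 then l else 0)" if "i < n" for i
  proof -
    have "A' $$ (i,0) = col A' 0 $ i" using A'c that n_def by simp
    thus ?thesis unfolding colA' using that by simp
  qed
  have symA': "sym_mat A'"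
  proof -
    have "transpose_mat A' = transpose_mat O1 * transpose_mat A * transpose_mat (transpose_mat O1)"
      unfolding A'_def using O1c A O1tc transpose_mult[OF O1tc, of "A*O1" n] transpose_mult[OF A O1c]
      by simp
    thus ?thesis using sym unfolding sym_mat_def A'_def by simp
  qed
  have A'0j: "A' $$ (0,j) = (if j = 0 then l else 0)" if "j < n" for j
    using sym_matD[OF symA' A'c, of 0 j] A'i0[OF that] that n_def by simp
  define A3 where "A3 = mat m m (\<lambda>(i,j). A' $$ (Suc i, Suc j))"
  have A3c: "A3 \<in> carrier_mat m m" unfolding A3_def by simp
  have symA3: "sym_mat A3" unfolding sym_mat_def A3_def
    by (rule eq_matI) (auto simp: sym_matD[OF symA' A'c] n_def)
  obtain O3 D3 where O3: "orth_mat m O3" and D3: "D3 \<in> carrier_mat m m" "diagonal_mat D3"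
    and A3eq: "A3 = O3 * D3 * transpose_mat O3" using Suc.IH[OF A3c symA3] by blast
  have O3c: "O3 \<in> carrier_mat m m" using orth_matD[OF O3] by auto
  define L where "L = mat 1 1 (\<lambda>_. l)"
  have Lc: "L \<in> carrier_mat 1 1" unfolding L_def by simp
  have A'eq: "A' = four_block_mat L (0\<^sub>m 1 m) (0\<^sub>m m 1) A3"
  proof (rule eq_matI)
    fix i j assume i: "i < dim_row (four_block_mat L (0\<^sub>m 1 m) (0\<^sub>m m 1) A3)"
      and j: "j < dim_col (four_block_mat L (0\<^sub>m 1 m) (0\<^sub>m m 1) A3)"
    hence i': "i < n" and j': "j < n" using Lc A3c n_def by auto
    show "A' $$ (i,j) = four_block_mat L (0\<^sub>m 1 m) (0\<^sub>m m 1) A3 $$ (i,j)"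
    proof (cases "i = 0")
      case True thus ?thesis using A'0j[OF j'] j Lc A3c by (auto simp: L_def)
    next
      case False
      show ?thesis
      proof (cases "j = 0")
        case True thus ?thesis using A'i0[OF i'] i Lc A3c False by (auto simp: L_def)
      next
        case False2: False
        obtain i0 where "i = Suc i0" using False by (cases i) auto
        moreover obtain j0 where "j = Suc j0" using False2 by (cases j) auto
        ultimately show ?thesis using i j Lc A3c by (auto simp: A3_def L_def)
      qed
    qed
  qed (insert A'c Lc A3c n_def, auto)
  define F where "F = four_block_mat (1\<^sub>m 1) (0\<^sub>m 1 m) (0\<^sub>m m 1) O3"
  define D where "D = four_block_mat L (0\<^sub>m 1 m) (0\<^sub>m m 1) D3"
  have Fc: "F \<in> carrier_mat n n" unfolding F_def n_def using O3c by (metis four_block_carrier_mat one_carrier_mat plus_1_eq_Suc)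
  have Dc: "D \<in> carrier_mat n n" unfolding D_def n_def using D3 Lc by (metis four_block_carrier_mat plus_1_eq_Suc)
  have FT: "transpose_mat F = four_block_mat (1\<^sub>m 1) (0\<^sub>m 1 m) (0\<^sub>m m 1) (transpose_mat O3)"
    unfolding F_def using O3c by (subst transpose_four_block_mat) auto
  have FTF: "transpose_mat F * F = 1\<^sub>m n"
    unfolding FT unfolding F_def using O3c orth_matD[OF O3] n_def
    by (subst mult_four_block_mat[of _ 1 1 _ m _ m _ _ 1 _ m]) auto
  have FFT: "F * transpose_mat F = 1\<^sub>m n"
    unfolding FT unfolding F_def using O3c orth_matD[OF O3] n_def
    by (subst mult_four_block_mat[of _ 1 1 _ m _ m _ _ 1 _ m]) auto
  have FDF: "F * D * transpose_mat F = A'"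
  proof -
    have "F * D = four_block_mat L (0\<^sub>m 1 m) (0\<^sub>m m 1) (O3 * D3)"
      unfolding F_def D_def using O3c D3 Lc
      by (subst mult_four_block_mat[of _ 1 1 _ m _ m _ _ 1 _ m]) auto
    hence "F * D * transpose_mat F = four_block_mat L (0\<^sub>m 1 m) (0\<^sub>m m 1) (O3 * D3) *
       four_block_mat (1\<^sub>m 1) (0\<^sub>m 1 m) (0\<^sub>m m 1) (transpose_mat O3)" unfolding FT by simp
    also have "\<dots> = four_block_mat L (0\<^sub>m 1 m) (0\<^sub>m m 1) (O3 * D3 * transpose_mat O3)"
      using O3c D3 Lc by (subst mult_four_block_mat[of _ 1 1 _ m _ m _ _ 1 _ m]) auto
    finally show ?thesis unfolding A'eq A3eq .
  qed
  have FTc: "transpose_mat F \<in> carrier_mat n n" using Fc by simp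
  define Om where "Om = O1 * F"
  have Omc: "Om \<in> carrier_mat n n" unfolding Om_def using O1c Fc by simp
  have "transpose_mat Om * Om = transpose_mat F * (transpose_mat O1 * O1) * F"
    unfolding Om_def using O1c Fc FTc O1tc by (simp add: transpose_mult[of _ n n] assoc_mult_mat[of _ n n _ n _ n])
  hence OTO: "transpose_mat Om * Om = 1\<^sub>m n" using O1b FTF Fc by simp
  have "Om * transpose_mat Om = O1 * (F * transpose_mat F) * transpose_mat O1"
    unfolding Om_def using O1c Fc FTc O1tc by (simp add: transpose_mult[of _ n n] assoc_mult_mat[of _ n n _ n _ n])
  hence OOT: "Om * transpose_mat Om = 1\<^sub>m n" using O1a FFT O1c by simp
  have "Om * D * transpose_mat Om = O1 * (F * D * transpose_mat F) * transpose_mat O1"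
    unfolding Om_def using O1c Fc Dc FTc O1tc by (simp add: transpose_mult[of _ n n] assoc_mult_mat[of _ n n _ n _ n])
  also have "\<dots> = (O1 * transpose_mat O1) * A * (O1 * transpose_mat O1)"
    unfolding FDF A'_def using O1c A O1tc by (simp add: assoc_mult_mat[of _ n n _ n _ n])
  also have "\<dots> = A" using O1a A by simp
  finally have AOm: "A = Om * D * transpose_mat Om" ..
  have diagD: "diagonal_mat D" unfolding diagonal_mat_def
  proof (intro allI impI)
    fix i j assume i: "i < dim_row D" and j: "j < dim_col D" and ij: "i \<noteq> j"
    show "D $$ (i,j) = 0"
    proof (cases "i = 0 \<or> j = 0")
      case True thus ?thesis using i j ij D3 Lc unfolding D_def by auto
    next
      case False
      then obtain i0 j0 where "i = Suc i0" "j = Suc j0" by (cases i; cases j) auto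
      thus ?thesis using i j ij D3 Lc unfolding D_def diagonal_mat_def by auto
    qed
  qed
  show ?case using OTO OOT Omc Dc diagD AOm n_def unfolding orth_mat_def by blast
qed




lemma qf_transpose:
  assumes B: "(B :: real mat) \<in> carrier_mat n n" and x: "x \<in> carrier_vec n" and y: "y \<in> carrier_vec n"
  shows "x \<bullet> (transpose_mat B *\<^sub>v y) = (B *\<^sub>v x) \<bullet> y"
proof -
  have "x \<bullet> (transpose_mat B *\<^sub>v y) = (transpose_mat B *\<^sub>v y) \<bullet> x"
    using B x y by (intro comm_scalar_prod[of _ n]) auto
  also have "\<dots> = y \<bullet> (B *\<^sub>v x)" using transpose_vec_mult_scalar[OF B x y] .
  also have "\<dots> = (B *\<^sub>v x) \<bullet> y" using B x y by (intro comm_scalar_prod[of _ n]) auto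
  finally show ?thesis .
qed

lemma sym_qf:
  assumes M: "(M :: real mat) \<in> carrier_mat n n" and s: "sym_mat M" and x: "x \<in> carrier_vec n" and y: "y \<in> carrier_vec n"
  shows "x \<bullet> (M *\<^sub>v y) = (M *\<^sub>v x) \<bullet> y"
  using qf_transpose[OF M x y] s unfolding sym_mat_def by simp

lemma psd_matD: "psd_mat n A \<Longrightarrow> A \<in> carrier_mat n n"
  "psd_mat n A \<Longrightarrow> sym_mat A"
  "psd_mat n A \<Longrightarrow> v \<in> carrier_vec n \<Longrightarrow> v \<bullet> (A *\<^sub>v v) \<ge> 0"
  unfolding psd_mat_def by auto

lemma pd_matD: "pd_mat n A \<Longrightarrow> A \<in> carrier_mat n n"
  "pd_mat n A \<Longrightarrow> sym_mat A"
  "pd_mat n A \<Longrightarrow> v \<in> carrier_vec n \<Longrightarrow> v \<noteq> 0\<^sub>v n \<Longrightarrow> v \<bullet> (A *\<^sub>v v) > 0"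
  unfolding pd_mat_def by auto

lemma pd_psd: assumes "pd_mat n A" shows "psd_mat n A"
  unfolding psd_mat_def
proof (intro conjI ballI)
  show "A \<in> carrier_mat n n" "sym_mat A" using pd_matD[OF assms] by auto
  fix v :: "real vec" assume v: "v \<in> carrier_vec n"
  show "v \<bullet> (A *\<^sub>v v) \<ge> 0"
  proof (cases "v = 0\<^sub>v n")
    case True thus ?thesis using pd_matD(1)[OF assms] by simp
  next
    case False thus ?thesis using pd_matD(3)[OF assms v] by simp
  qed
qed

lemma sym_congr:
  assumes A: "(A :: real mat) \<in> carrier_mat n n" and s: "sym_mat A" and B: "B \<in> carrier_mat n m"
  shows "sym_mat (transpose_mat B * A * B)"
proof -
  have BA: "transpose_mat B * A \<in> carrier_mat m n" using A B by simp
  have "transpose_mat (transpose_mat B * A * B) = transpose_mat B * transpose_mat (transpose_mat B * A)"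
    using transpose_mult[OF BA B] .
  also have "transpose_mat (transpose_mat B * A) = transpose_mat A * B"
    using transpose_mult[of "transpose_mat B" m n A n] A B by simp
  finally have "transpose_mat (transpose_mat B * A * B) = transpose_mat B * (A * B)"
    using s unfolding sym_mat_def by simp
  thus ?thesis unfolding sym_mat_def using A B by simp
qed

lemma qf_congr:
  assumes A: "(A :: real mat) \<in> carrier_mat n n" and B: "B \<in> carrier_mat n m" and x: "x \<in> carrier_vec m"
  shows "x \<bullet> ((transpose_mat B * A * B) *\<^sub>v x) = (B *\<^sub>v x) \<bullet> (A *\<^sub>v (B *\<^sub>v x))"
proof -
  have "(transpose_mat B * A * B) *\<^sub>v x = transpose_mat B *\<^sub>v (A *\<^sub>v (B *\<^sub>v x))"
    using A B x assoc_mult_mat_vec[of "transpose_mat B" m n "A * B" m x] assoc_mult_mat_vec[of A n n B m x]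
    by simp
  moreover have "x \<bullet> (transpose_mat B *\<^sub>v (A *\<^sub>v (B *\<^sub>v x))) = (B *\<^sub>v x) \<bullet> (A *\<^sub>v (B *\<^sub>v x))"
    using transpose_vec_mult_scalar[OF B x, of "A *\<^sub>v (B *\<^sub>v x)"] A B x
      comm_scalar_prod[of x m "transpose_mat B *\<^sub>v (A *\<^sub>v (B *\<^sub>v x))"]
      comm_scalar_prod[of "A *\<^sub>v (B *\<^sub>v x)" n "B *\<^sub>v x"]
    by simp
  ultimately show ?thesis by simp
qed

lemma psd_congr:
  assumes A: "psd_mat n A" and B: "B \<in> carrier_mat n m"
  shows "psd_mat m (transpose_mat B * A * B)"
  unfolding psd_mat_def
proof (intro conjI ballI)
  show "transpose_mat B * A * B \<in> carrier_mat m m" using psd_matD(1)[OF A] B by simp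
  show "sym_mat (transpose_mat B * A * B)" using sym_congr[OF psd_matD(1,2)[OF A] B] .
  fix x :: "real vec" assume x: "x \<in> carrier_vec m"
  have "B *\<^sub>v x \<in> carrier_vec n" using B x by simp
  thus "x \<bullet> ((transpose_mat B * A * B) *\<^sub>v x) \<ge> 0"
    unfolding qf_congr[OF psd_matD(1)[OF A] B x] using psd_matD(3)[OF A] by blast
qed

lemma pd_congr:
  assumes A: "pd_mat n A" and B: "B \<in> carrier_mat n m"
    and inj: "\<And>x. x \<in> carrier_vec m \<Longrightarrow> B *\<^sub>v x = 0\<^sub>v n \<Longrightarrow> x = 0\<^sub>v m"
  shows "pd_mat m (transpose_mat B * A * B)"
  unfolding pd_mat_def
proof (intro conjI ballI impI)
  show "transpose_mat B * A * B \<in> carrier_mat m m" using pd_matD(1)[OF A] B by simp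
  show "sym_mat (transpose_mat B * A * B)" using sym_congr[OF pd_matD(1,2)[OF A] B] .
  fix x :: "real vec" assume x: "x \<in> carrier_vec m" and x0: "x \<noteq> 0\<^sub>v m"
  have "B *\<^sub>v x \<in> carrier_vec n" using B x by simp
  moreover have "B *\<^sub>v x \<noteq> 0\<^sub>v n" using inj x x0 by blast
  ultimately show "x \<bullet> ((transpose_mat B * A * B) *\<^sub>v x) > 0"
    unfolding qf_congr[OF pd_matD(1)[OF A] B x] using pd_matD(3)[OF A] by blast
qed

definition dmat :: "nat \<Rightarrow> (nat \<Rightarrow> real) \<Rightarrow> real mat" where
  "dmat n f = mat n n (\<lambda>(i,j). if i = j then f i else 0)"

lemma dmat_carrier[simp]: "dmat n f \<in> carrier_mat n n" unfolding dmat_def by simp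

lemma dmat_index[simp]: "i < n \<Longrightarrow> j < n \<Longrightarrow> dmat n f $$ (i,j) = (if i = j then f i else 0)"
  "dim_row (dmat n f) = n" "dim_col (dmat n f) = n"
  unfolding dmat_def by auto

lemma sum_single: "finite A \<Longrightarrow> k \<in> A \<Longrightarrow> (\<And>j. j \<in> A \<Longrightarrow> j \<noteq> k \<Longrightarrow> f j = 0) \<Longrightarrow> sum f A = (f k :: real)"
  by (metis sum.remove add.right_neutral sum.neutral Diff_iff singletonI)

lemma dmat_mult: "dmat n f * dmat n g = dmat n (\<lambda>i. f i * g i)"
proof (rule eq_matI)
  fix i j assume "i < dim_row (dmat n (\<lambda>i. f i * g i))" "j < dim_col (dmat n (\<lambda>i. f i * g i))"
  hence i: "i < n" and j: "j < n" by auto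
  have "(dmat n f * dmat n g) $$ (i,j) = (\<Sum>k\<in>{0..<n}. dmat n f $$ (i,k) * dmat n g $$ (k,j))"
    using i j by (simp add: scalar_prod_def)
  also have "\<dots> = dmat n f $$ (i,i) * dmat n g $$ (i,j)"
    by (rule sum_single) (insert i j, auto)
  finally show "(dmat n f * dmat n g) $$ (i,j) = dmat n (\<lambda>i. f i * g i) $$ (i,j)" using i j by simp
qed auto

lemma dmat_transpose[simp]: "transpose_mat (dmat n f) = dmat n f"
  by (rule eq_matI) auto

lemma dmat_qf: "x \<in> carrier_vec n \<Longrightarrow> x \<bullet> (dmat n f *\<^sub>v x) = (\<Sum>i<n. f i * (x $ i)^2)"
proof -
  assume x: "x \<in> carrier_vec n"
  have "(dmat n f *\<^sub>v x) $ i = f i * x $ i" if i: "i < n" for i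
  proof -
    have "(dmat n f *\<^sub>v x) $ i = (\<Sum>k\<in>{0..<n}. dmat n f $$ (i,k) * x $ k)"
      using i x by (simp add: scalar_prod_def)
    also have "\<dots> = dmat n f $$ (i,i) * x $ i" by (rule sum_single) (insert i, auto)
    finally show ?thesis using i by simp
  qed
  thus ?thesis using x by (simp add: scalar_prod_def lessThan_atLeast0 power2_eq_square ac_simps)
qed

lemma diagonal_dmat: "D \<in> carrier_mat n n \<Longrightarrow> diagonal_mat D \<Longrightarrow> D = dmat n (\<lambda>i. D $$ (i,i))"
  by (rule eq_matI) (auto simp: diagonal_mat_def)

lemma orth_transpose: "orth_mat n Om \<Longrightarrow> orth_mat n (transpose_mat Om)"
  unfolding orth_mat_def by auto

lemma spectral_D:
  assumes Om: "orth_mat n Om" and D: "D \<in> carrier_mat n n" and A: "A = Om * D * transpose_mat Om"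
  shows "D = transpose_mat Om * A * Om"
proof -
  have Oc: "Om \<in> carrier_mat n n" "transpose_mat Om \<in> carrier_mat n n" using orth_matD[OF Om] by auto
  have "transpose_mat Om * A * Om = (transpose_mat Om * Om) * D * (transpose_mat Om * Om)"
    unfolding A using Oc D by (simp add: assoc_mult_mat[of _ n n _ n _ n] mult_carrier_mat[of _ n n _ n])
  thus ?thesis using orth_matD[OF Om] D by simp
qed

lemma spectral_dmat:
  assumes "A \<in> carrier_mat n n" "sym_mat A"
  shows "\<exists>Om f. orth_mat n Om \<and> A = Om * dmat n f * transpose_mat Om"
proof -
  obtain Om D where "orth_mat n Om" "D \<in> carrier_mat n n" "diagonal_mat D" "A = Om * D * transpose_mat Om"
    using spectral[OF assms] by blast
  thus ?thesis using diagonal_dmat by metis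
qed

lemma psd_dmat: "psd_mat n (dmat n f) \<Longrightarrow> i < n \<Longrightarrow> f i \<ge> 0"
proof -
  assume p: "psd_mat n (dmat n f)" and i: "i < n"
  have "unit_vec n i \<bullet> (dmat n f *\<^sub>v unit_vec n i) \<ge> 0" using psd_matD(3)[OF p] by simp
  also have "unit_vec n i \<bullet> (dmat n f *\<^sub>v unit_vec n i) = (\<Sum>k<n. f k * (unit_vec n i $ k)^2)"
    by (rule dmat_qf) simp
  also have "\<dots> = f i * (unit_vec n i $ i)^2" by (rule sum_single) (insert i, auto)
  finally show ?thesis using i by simp
qed

lemma dmat_psd: "(\<And>i. i < n \<Longrightarrow> f i \<ge> 0) \<Longrightarrow> psd_mat n (dmat n f)"
  unfolding psd_mat_def sym_mat_def by (auto simp: dmat_qf intro!: sum_nonneg)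

lemma psd_sqrt_exists:
  assumes A: "psd_mat n A"
  shows "\<exists>M. psd_mat n M \<and> M * M = A"
proof -
  obtain Om f where Om: "orth_mat n Om" and Aeq: "A = Om * dmat n f * transpose_mat Om"
    using spectral_dmat[OF psd_matD(1,2)[OF A]] by blast
  have Oc: "Om \<in> carrier_mat n n" "transpose_mat Om \<in> carrier_mat n n" using orth_matD[OF Om] by auto
  have "dmat n f = transpose_mat Om * A * Om" using spectral_D[OF Om _ Aeq] by simp
  hence pf: "psd_mat n (dmat n f)" using psd_congr[OF A Oc(1)] by simp
  have f: "f i \<ge> 0" if "i < n" for i using psd_dmat[OF pf that] .
  define S where "S = dmat n (\<lambda>i. sqrt (f i))"
  have SS: "S * S = dmat n f" unfolding S_def dmat_mult using f
    by (intro eq_matI) (auto simp: dmat_def)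
  have Sp: "psd_mat n S" unfolding S_def by (rule dmat_psd) (simp add: f)
  define M where "M = Om * S * transpose_mat Om"
  have "psd_mat n M" unfolding M_def using psd_congr[OF Sp Oc(2)] by simp
  moreover have "M * M = A"
  proof -
    have "M * M = Om * S * (transpose_mat Om * Om) * S * transpose_mat Om"
      unfolding M_def S_def using Oc by (simp add: assoc_mult_mat[of _ n n _ n _ n] mult_carrier_mat[of _ n n _ n])
    also have "\<dots> = Om * (S * S) * transpose_mat Om"
      using orth_matD[OF Om] Oc unfolding S_def by (simp add: assoc_mult_mat[of _ n n _ n _ n] mult_carrier_mat[of _ n n _ n])
    finally show ?thesis unfolding SS Aeq .
  qed
  ultimately show ?thesis by blast
qed




lemma mult_mat_vec_zero[simp]: "A \<in> carrier_mat m n \<Longrightarrow> A *\<^sub>v 0\<^sub>v n = (0\<^sub>v m :: real vec)"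
  by (intro eq_vecI) (auto simp: row_def)

lemma psd_zero:
  assumes M: "psd_mat n M" and x: "x \<in> carrier_vec n" and z: "x \<bullet> (M *\<^sub>v x) = 0"
  shows "M *\<^sub>v x = 0\<^sub>v n"
proof -
  obtain R where R: "psd_mat n R" and RR: "R * R = M" using psd_sqrt_exists[OF M] by blast
  have Rc: "R \<in> carrier_mat n n" using psd_matD(1)[OF R] .
  have Rx: "R *\<^sub>v x \<in> carrier_vec n" using Rc x by simp
  have "x \<bullet> (M *\<^sub>v x) = x \<bullet> (R *\<^sub>v (R *\<^sub>v x))" unfolding RR[symmetric] using Rc x by simp
  also have "\<dots> = (R *\<^sub>v x) \<bullet> (R *\<^sub>v x)" using sym_qf[OF Rc psd_matD(2)[OF R] x Rx] .
  finally have "R *\<^sub>v x = 0\<^sub>v n" using z real_sq_vec_eq0[OF Rx] by simp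
  thus ?thesis unfolding RR[symmetric] using Rc x by simp
qed

lemma col_unit: "(Om :: real mat) \<in> carrier_mat n n \<Longrightarrow> k < n \<Longrightarrow> Om *\<^sub>v unit_vec n k = col Om k"
proof -
  assume Oc: "Om \<in> carrier_mat n n" and k: "k < n"
  have "col (Om * 1\<^sub>m n) k = Om *\<^sub>v col (1\<^sub>m n) k" using Oc k by (subst col_mult2) auto
  thus ?thesis using Oc k right_mult_one_mat[OF Oc] by simp
qed

lemma sqrt_unique:
  assumes M1: "psd_mat n M1" and M2: "psd_mat n M2" and eq: "M1 * M1 = M2 * M2"
  shows "M1 = M2"
proof -
  have M1c: "M1 \<in> carrier_mat n n" and M2c: "M2 \<in> carrier_mat n n" using psd_matD(1) M1 M2 by auto
  define Z where "Z = M1 - M2"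
  have Zc: "Z \<in> carrier_mat n n" unfolding Z_def using M2c by (rule minus_carrier_mat)
  have symZ: "sym_mat Z" unfolding Z_def sym_mat_def using M1c M2c psd_matD(2)[OF M1] psd_matD(2)[OF M2]
    by (simp add: transpose_minus sym_mat_def)
  obtain Om f where Om: "orth_mat n Om" and Zeq: "Z = Om * dmat n f * transpose_mat Om"
    using spectral_dmat[OF Zc symZ] by blast
  have Oc: "Om \<in> carrier_mat n n" "transpose_mat Om \<in> carrier_mat n n" using orth_matD[OF Om] by auto
  have ZO: "Z * Om = Om * dmat n f"
    unfolding Zeq using Oc orth_matD[OF Om]
    by (simp add: assoc_mult_mat[of _ n n _ n _ n] mult_carrier_mat[of _ n n _ n])
  have f0: "f k = 0" if k: "k < n" for k
  proof (rule ccontr)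
    assume fk: "f k \<noteq> 0"
    define x where "x = col Om k"
    have x: "x \<in> carrier_vec n" unfolding x_def using Oc k by simp
    have "x \<bullet> x = (transpose_mat Om * Om) $$ (k,k)" unfolding x_def using Oc k by simp
    hence xx: "x \<bullet> x = 1" using orth_matD(3)[OF Om] k by simp
    hence x0: "x \<noteq> 0\<^sub>v n" by auto
    have "Z *\<^sub>v x = col (Z * Om) k" unfolding x_def using Oc Zc k by (subst col_mult2) auto
    also have "\<dots> = Om *\<^sub>v col (dmat n f) k" unfolding ZO using Oc k by (subst col_mult2) auto
    also have "col (dmat n f) k = f k \<cdot>\<^sub>v unit_vec n k" using k by (intro eq_vecI) auto
    also have "Om *\<^sub>v (f k \<cdot>\<^sub>v unit_vec n k) = f k \<cdot>\<^sub>v x"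
      unfolding x_def using mult_mat_vec[OF Oc(1), of "unit_vec n k" "f k"] col_unit[OF Oc(1) k] by simp
    finally have Zx: "Z *\<^sub>v x = f k \<cdot>\<^sub>v x" .
    define a where "a = M1 *\<^sub>v x"
    define b where "b = M2 *\<^sub>v x"
    have a: "a \<in> carrier_vec n" and b: "b \<in> carrier_vec n" unfolding a_def b_def using M1c M2c x by auto
    have Zab: "Z *\<^sub>v x = a - b" unfolding Z_def a_def b_def using M1c M2c x
      by (simp add: minus_mult_distrib_mat_vec)
    have aa: "a \<bullet> a = x \<bullet> (M1 *\<^sub>v a)" using sym_qf[OF M1c psd_matD(2)[OF M1] x a] unfolding a_def by simp
    have bb: "b \<bullet> b = x \<bullet> (M2 *\<^sub>v b)" using sym_qf[OF M2c psd_matD(2)[OF M2] x b] unfolding b_def by simp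
    have "M1 *\<^sub>v a = M2 *\<^sub>v b" unfolding a_def b_def using M1c M2c x eq
      by (metis assoc_mult_mat_vec)
    hence aabb: "a \<bullet> a = b \<bullet> b" using aa bb by simp
    have ab: "a \<bullet> b = b \<bullet> a" using a b by (rule comm_scalar_prod)
    have "a \<bullet> (a - b) + (a - b) \<bullet> b = a \<bullet> a - b \<bullet> b"
      using a b ab by (simp add: scalar_prod_minus_distrib[of _ n] minus_scalar_prod_distrib[of _ n])
    hence "a \<bullet> (f k \<cdot>\<^sub>v x) + (f k \<cdot>\<^sub>v x) \<bullet> b = 0" using aabb Zx Zab by simp
    hence "f k * (a \<bullet> x + x \<bullet> b) = 0" using a b x by (simp add: algebra_simps)
    hence "a \<bullet> x + x \<bullet> b = 0" using fk by simp
    moreover have "a \<bullet> x = x \<bullet> a" using a x by (rule comm_scalar_prod)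
    moreover have "x \<bullet> a \<ge> 0" "x \<bullet> b \<ge> 0" unfolding a_def b_def using psd_matD(3) M1 M2 x by auto
    ultimately have xa: "x \<bullet> a = 0" and xb: "x \<bullet> b = 0" by linarith+
    have "a = 0\<^sub>v n" unfolding a_def by (rule psd_zero[OF M1 x]) (use xa a_def in simp)
    moreover have "b = 0\<^sub>v n" unfolding b_def by (rule psd_zero[OF M2 x]) (use xb b_def in simp)
    ultimately have "f k \<cdot>\<^sub>v x = 0\<^sub>v n" using Zx Zab by simp
    hence "f k * (x \<bullet> x) = 0" using x by (metis scalar_prod_left_zero smult_scalar_prod_distrib carrier_vecD)
    thus False using xx fk by simp
  qed
  have "dmat n f = 0\<^sub>m n n" using f0 by (intro eq_matI) auto
  hence "Z = 0\<^sub>m n n" unfolding Zeq using Oc by simp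
  thus ?thesis unfolding Z_def using M1c M2c
    by (metis minus_r_inv_mat minus_add_uminus_mat add_uminus_minus_mat eq_matI index_minus_mat(1) index_zero_mat(1) carrier_matD right_minus_eq)
qed

lemma psd_sqrt:
  assumes A: "psd_mat n A"
  shows "psd_mat n (psd_sqrt A)" "psd_sqrt A * psd_sqrt A = A"
proof -
  have dr: "dim_row A = n" using psd_matD(1)[OF A] by simp
  have ex: "\<exists>!M. psd_mat (dim_row A) M \<and> M * M = A"
    unfolding dr using psd_sqrt_exists[OF A] sqrt_unique by blast
  have "psd_mat (dim_row A) (psd_sqrt A) \<and> psd_sqrt A * psd_sqrt A = A"
    unfolding psd_sqrt_def by (rule theI'[OF ex])
  thus "psd_mat n (psd_sqrt A)" "psd_sqrt A * psd_sqrt A = A" unfolding dr by auto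
qed

lemma psd_sqrt_eq:
  assumes A: "psd_mat n A" and M: "psd_mat n M" and MM: "M * M = A"
  shows "psd_sqrt A = M"
  using sqrt_unique[OF psd_sqrt(1)[OF A] M] psd_sqrt(2)[OF A] MM by simp

lemma psd_sqrt_carrier: "psd_mat n A \<Longrightarrow> psd_sqrt A \<in> carrier_mat n n"
  using psd_sqrt(1) psd_matD(1) by blast

lemma pd_sqrt:
  assumes A: "pd_mat n A"
  shows "pd_mat n (psd_sqrt A)"
proof -
  have Ap: "psd_mat n A" using pd_psd[OF A] .
  note R = psd_sqrt[OF Ap]
  have Rc: "psd_sqrt A \<in> carrier_mat n n" using psd_matD(1)[OF R(1)] .
  show ?thesis unfolding pd_mat_def
  proof (intro conjI ballI impI)
    show "psd_sqrt A \<in> carrier_mat n n" "sym_mat (psd_sqrt A)" using psd_matD[OF R(1)] by auto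
    fix v :: "real vec" assume v: "v \<in> carrier_vec n" and v0: "v \<noteq> 0\<^sub>v n"
    have ge: "v \<bullet> (psd_sqrt A *\<^sub>v v) \<ge> 0" using psd_matD(3)[OF R(1) v] .
    show "v \<bullet> (psd_sqrt A *\<^sub>v v) > 0"
    proof (rule ccontr)
      assume "\<not> ?thesis"
      hence "v \<bullet> (psd_sqrt A *\<^sub>v v) = 0" using ge by simp
      hence "psd_sqrt A *\<^sub>v v = 0\<^sub>v n" using psd_zero[OF R(1) v] by simp
      moreover have "A *\<^sub>v v = psd_sqrt A *\<^sub>v (psd_sqrt A *\<^sub>v v)"
        using R(2) Rc v by (metis assoc_mult_mat_vec)
      ultimately have "A *\<^sub>v v = 0\<^sub>v n" using Rc by simp
      hence "v \<bullet> (A *\<^sub>v v) = 0" using v by simp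
      thus False using pd_matD(3)[OF A v v0] by simp
    qed
  qed
qed

lemma inv_exists:
  assumes A: "(A :: real mat) \<in> carrier_mat n n"
    and inj: "\<And>x. x \<in> carrier_vec n \<Longrightarrow> A *\<^sub>v x = 0\<^sub>v n \<Longrightarrow> x = 0\<^sub>v n"
  shows "\<exists>B. B \<in> carrier_mat n n \<and> A * B = 1\<^sub>m n \<and> B * A = 1\<^sub>m n"
proof -
  have "det A \<noteq> 0" using det_0_iff_vec_prod_zero[OF A] inj by blast
  from det_non_zero_imp_unit[OF A this, of undefined]
  show ?thesis unfolding Units_def ring_mat_def by auto
qed

lemma pd_inj: "pd_mat n A \<Longrightarrow> x \<in> carrier_vec n \<Longrightarrow> A *\<^sub>v x = 0\<^sub>v n \<Longrightarrow> x = 0\<^sub>v n"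
  using pd_matD(3)[of n A x] by fastforce

lemma pd_inv:
  assumes A: "pd_mat n A"
  shows "\<exists>B. pd_mat n B \<and> A * B = 1\<^sub>m n \<and> B * A = 1\<^sub>m n"
proof -
  have Ac: "A \<in> carrier_mat n n" using pd_matD(1)[OF A] .
  obtain B where Bc: "B \<in> carrier_mat n n" and AB: "A * B = 1\<^sub>m n" and BA: "B * A = 1\<^sub>m n"
    using inv_exists[OF Ac pd_inj[OF A]] by blast
  have BTc: "transpose_mat B \<in> carrier_mat n n" using Bc by simp
  have "transpose_mat B * A = 1\<^sub>m n"
    using arg_cong[OF AB, of transpose_mat] transpose_mult[OF Ac Bc] pd_matD(2)[OF A]
    unfolding sym_mat_def by simp
  hence "transpose_mat B = transpose_mat B * (A * B)" using AB BTc by simp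
  also have "\<dots> = (transpose_mat B * A) * B" using BTc Ac Bc by simp
  also have "\<dots> = B" using \<open>transpose_mat B * A = 1\<^sub>m n\<close> Bc by simp
  finally have symB: "sym_mat B" unfolding sym_mat_def .
  have "pd_mat n B" unfolding pd_mat_def
  proof (intro conjI ballI impI Bc symB)
    fix x :: "real vec" assume x: "x \<in> carrier_vec n" and x0: "x \<noteq> 0\<^sub>v n"
    define y where "y = B *\<^sub>v x"
    have y: "y \<in> carrier_vec n" unfolding y_def using Bc x by simp
    have Ay: "A *\<^sub>v y = x" unfolding y_def using Ac Bc x AB by (metis assoc_mult_mat_vec one_mult_mat_vec)
    have y0: "y \<noteq> 0\<^sub>v n" using Ay x0 Ac by auto
    have "x \<bullet> (B *\<^sub>v x) = (A *\<^sub>v y) \<bullet> y" unfolding y_def[symmetric] Ay ..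
    also have "\<dots> = y \<bullet> (A *\<^sub>v y)" using comm_scalar_prod[of "A *\<^sub>v y" n y] Ac y by simp
    finally show "x \<bullet> (B *\<^sub>v x) > 0" using pd_matD(3)[OF A y y0] by simp
  qed
  thus ?thesis using AB BA by blast
qed




lemma diag_entry_qf:
  assumes M: "(M :: real mat) \<in> carrier_mat n n" and k: "k < n"
  shows "M $$ (k,k) = unit_vec n k \<bullet> (M *\<^sub>v unit_vec n k)"
  using col_unit[OF M k] M k by simp

lemma trace_qf_pos:
  assumes P: "pd_mat n P" and Z: "Z \<in> carrier_mat n n"
  shows "mtrace (transpose_mat Z * P * Z) \<ge> 0"
    "mtrace (transpose_mat Z * P * Z) = 0 \<Longrightarrow> Z = 0\<^sub>m n n"
proof -
  have Pc: "P \<in> carrier_mat n n" using pd_matD(1)[OF P] .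
  have M: "transpose_mat Z * P * Z \<in> carrier_mat n n" using Pc Z by simp
  have e: "(transpose_mat Z * P * Z) $$ (k,k) = col Z k \<bullet> (P *\<^sub>v col Z k)" if k: "k < n" for k
    unfolding diag_entry_qf[OF M k] qf_congr[OF Pc Z unit_vec_carrier] col_unit[OF Z k] ..
  have ge: "col Z k \<bullet> (P *\<^sub>v col Z k) \<ge> 0" if k: "k < n" for k
    using pd_psd[OF P] psd_matD(3) Z k by (metis col_carrier_vec carrier_matD(1))
  have tr: "mtrace (transpose_mat Z * P * Z) = (\<Sum>k<n. col Z k \<bullet> (P *\<^sub>v col Z k))"
  proof -
    have dr: "dim_row (transpose_mat Z * P * Z) = n" using Z by simp
    show ?thesis unfolding mtrace_def dr by (rule sum.cong[OF refl]) (rule e, simp)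
  qed
  show "mtrace (transpose_mat Z * P * Z) \<ge> 0" unfolding tr using ge by (intro sum_nonneg) simp
  assume z: "mtrace (transpose_mat Z * P * Z) = 0"
  have "\<forall>k\<in>{..<n}. col Z k \<bullet> (P *\<^sub>v col Z k) = 0"
    using z unfolding tr by (subst sum_nonneg_eq_0_iff[symmetric]) (use ge in auto)
  hence c0: "col Z k = 0\<^sub>v n" if "k < n" for k
    using pd_matD(3)[OF P, of "col Z k"] that Z by fastforce
  show "Z = 0\<^sub>m n n"
  proof (rule eq_matI)
    fix i j assume "i < dim_row (0\<^sub>m n n)" "j < dim_col (0\<^sub>m n n)"
    hence i: "i < n" and j: "j < n" by auto
    have "Z $$ (i,j) = col Z j $ i" using Z i j by simp
    thus "Z $$ (i,j) = 0\<^sub>m n n $$ (i,j)" using c0[OF j] i j by simp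
  qed (use Z in auto)
qed

lemma key_ineq:
  assumes Y: "pd_mat n Y" and Yi: "pd_mat n Yi" and YYi: "Y * Yi = 1\<^sub>m n" and YiY: "Yi * Y = 1\<^sub>m n"
    and X: "psd_mat n X"
  shows "mtrace (X * Yi) + mtrace Y - 2 * mtrace (psd_sqrt X) \<ge> 0"
    "mtrace (X * Yi) + mtrace Y - 2 * mtrace (psd_sqrt X) = 0 \<Longrightarrow> psd_sqrt X = Y"
proof -
  define R where "R = psd_sqrt X"
  have Rc: "R \<in> carrier_mat n n" unfolding R_def using psd_sqrt_carrier[OF X] .
  have RR: "R * R = X" unfolding R_def using psd_sqrt(2)[OF X] .
  have symR: "sym_mat R" unfolding R_def using psd_matD(2)[OF psd_sqrt(1)[OF X]] .
  have symY: "sym_mat Y" using pd_matD(2)[OF Y] .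
  have Yc: "Y \<in> carrier_mat n n" and Yic: "Yi \<in> carrier_mat n n" using pd_matD(1) Y Yi by auto
  have Xc: "X \<in> carrier_mat n n" using psd_matD(1)[OF X] .
  define Z where "Z = R - Y"
  have Zc: "Z \<in> carrier_mat n n" unfolding Z_def using Yc by (rule minus_carrier_mat)
  have ZT: "transpose_mat Z = Z" unfolding Z_def using Rc Yc symR symY
    by (simp add: transpose_minus sym_mat_def)
  have ZYi: "Z * Yi = R * Yi - 1\<^sub>m n"
    unfolding Z_def using minus_mult_distrib_mat[OF Rc Yc Yic] YYi by simp
  have RYic: "R * Yi \<in> carrier_mat n n" using Rc Yic by simp
  have "mtrace (Z * Yi * Z) = mtrace ((R * Yi - 1\<^sub>m n) * Z)" unfolding ZYi ..
  also have "\<dots> = mtrace (R * Yi * Z - Z)"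
    using minus_mult_distrib_mat[OF RYic one_carrier_mat Zc] Zc by simp
  also have "\<dots> = mtrace (R * Yi * Z) - mtrace Z"
    using mtrace_minus[of "R * Yi * Z" n Z] RYic Zc by simp
  also have "R * Yi * Z = R * Yi * R - R * Yi * Y"
    unfolding Z_def using mult_minus_distrib_mat[OF RYic Rc Yc] .
  also have "mtrace (R * Yi * R - R * Yi * Y) = mtrace (R * Yi * R) - mtrace (R * Yi * Y)"
    using mtrace_minus[of "R * Yi * R" n "R * Yi * Y"] RYic Rc Yc by simp
  also have "R * Yi * Y = R" using Rc Yic Yc YiY by simp
  also have "mtrace (R * Yi * R) = mtrace (X * Yi)"
  proof -
    have "mtrace (R * Yi * R) = mtrace (R * (R * Yi))" using mtrace_comm[OF RYic Rc] .
    also have "R * (R * Yi) = X * Yi" using Rc Yic RR by (simp flip: RR)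
    finally show ?thesis .
  qed
  also have "mtrace Z = mtrace R - mtrace Y" unfolding Z_def using mtrace_minus Rc Yc by blast
  finally have id: "mtrace (Z * Yi * Z) = mtrace (X * Yi) + mtrace Y - 2 * mtrace R" by simp
  have tp: "mtrace (transpose_mat Z * Yi * Z) = mtrace (Z * Yi * Z)" unfolding ZT ..
  show "mtrace (X * Yi) + mtrace Y - 2 * mtrace (psd_sqrt X) \<ge> 0"
    using trace_qf_pos(1)[OF Yi Zc] unfolding tp id R_def .
  assume "mtrace (X * Yi) + mtrace Y - 2 * mtrace (psd_sqrt X) = 0"
  hence "Z = 0\<^sub>m n n" using trace_qf_pos(2)[OF Yi Zc] unfolding tp id R_def by simp
  thus "psd_sqrt X = Y" unfolding Z_def R_def[symmetric] using Rc Yc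
    by (metis minus_add_uminus_mat add_uminus_minus_mat eq_matI index_minus_mat(1) index_zero_mat(1) carrier_matD right_minus_eq)
qed

lemma eq_of_minus0: "(A :: real mat) \<in> carrier_mat n n \<Longrightarrow> B \<in> carrier_mat n n \<Longrightarrow> A - B = 0\<^sub>m n n \<Longrightarrow> A = B"
  by (metis minus_add_uminus_mat add_uminus_minus_mat eq_matI index_minus_mat(1) index_zero_mat(1) carrier_matD right_minus_eq)

lemma sqrt_setup:
  assumes C: "pd_mat n C"
  shows "\<exists>Ki. pd_mat n (psd_sqrt C) \<and> psd_sqrt C * psd_sqrt C = C \<and> Ki \<in> carrier_mat n n
     \<and> psd_sqrt C * Ki = 1\<^sub>m n \<and> Ki * psd_sqrt C = 1\<^sub>m n"
proof -
  have K: "pd_mat n (psd_sqrt C)" using pd_sqrt[OF C] .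
  obtain Ki where "pd_mat n Ki" "psd_sqrt C * Ki = 1\<^sub>m n" "Ki * psd_sqrt C = 1\<^sub>m n"
    using pd_inv[OF K] by blast
  thus ?thesis using K psd_sqrt(2)[OF pd_psd[OF C]] pd_matD(1) by blast
qed

lemma X_pd:
  assumes K: "pd_mat n K" and S: "pd_mat n S"
  shows "pd_mat n (K * S * K)"
proof -
  have "transpose_mat K = K" using pd_matD(2)[OF K] unfolding sym_mat_def .
  thus ?thesis using pd_congr[OF S pd_matD(1)[OF K] pd_inj[OF K]] by simp
qed

lemma wterm_nonneg:
  assumes C: "pd_mat n C" and S: "pd_mat n S"
  shows "mtrace C + mtrace S - 2 * mtrace (psd_sqrt (psd_sqrt C * S * psd_sqrt C)) \<ge> 0"
proof -
  define K where "K = psd_sqrt C"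
  obtain Ki where K: "pd_mat n K" and KK: "K * K = C" and Kic: "Ki \<in> carrier_mat n n"
    and KKi: "K * Ki = 1\<^sub>m n" and KiK: "Ki * K = 1\<^sub>m n" using sqrt_setup[OF C] unfolding K_def by blast
  obtain Ci where Ci: "pd_mat n Ci" and CCi: "C * Ci = 1\<^sub>m n" and CiC: "Ci * C = 1\<^sub>m n"
    using pd_inv[OF C] by blast
  have Kc: "K \<in> carrier_mat n n" and Cic: "Ci \<in> carrier_mat n n" and Sc: "S \<in> carrier_mat n n"
    using pd_matD(1) K Ci S by auto
  have KCi: "K * Ci = Ki"
  proof -
    have "Ki = Ki * (K * K * Ci)" using KK CCi Kic by simp
    also have "\<dots> = (Ki * K) * (K * Ci)" using Kic Kc Cic
      by (simp add: assoc_mult_mat[of _ n n _ n _ n] mult_carrier_mat[of _ n n _ n])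
    finally show ?thesis using KiK Kc Cic by simp
  qed
  define X where "X = K * S * K"
  have X: "pd_mat n X" unfolding X_def using X_pd[OF K S] .
  have "mtrace (X * Ci) = mtrace (K * (S * Ki))" unfolding X_def using Kc Sc Cic KCi
    by (simp add: assoc_mult_mat[of _ n n _ n _ n] mult_carrier_mat[of _ n n _ n])
  also have "\<dots> = mtrace ((S * Ki) * K)" using mtrace_comm[of K n n "S * Ki"] Kc Sc Kic by simp
  also have "\<dots> = mtrace S" using Sc Kic Kc KiK by simp
  finally have tr: "mtrace (X * Ci) = mtrace S" .
  show ?thesis using key_ineq(1)[OF C Ci CCi CiC pd_psd[OF X]] tr unfolding X_def K_def by linarith
qed

lemma strict_mid:
  assumes C: "pd_mat n C" and S0: "pd_mat n S0" and S1: "pd_mat n S1" and ne: "S0 \<noteq> S1"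
  shows "2 * mtrace (psd_sqrt (psd_sqrt C * ((1/2) \<cdot>\<^sub>m (S0 + S1)) * psd_sqrt C)) >
     mtrace (psd_sqrt (psd_sqrt C * S0 * psd_sqrt C)) + mtrace (psd_sqrt (psd_sqrt C * S1 * psd_sqrt C))"
proof -
  define K where "K = psd_sqrt C"
  obtain Ki where K: "pd_mat n K" and KK: "K * K = C" and Kic: "Ki \<in> carrier_mat n n"
    and KKi: "K * Ki = 1\<^sub>m n" and KiK: "Ki * K = 1\<^sub>m n" using sqrt_setup[OF C] unfolding K_def by blast
  have Kc: "K \<in> carrier_mat n n" and S0c: "S0 \<in> carrier_mat n n" and S1c: "S1 \<in> carrier_mat n n"
    using pd_matD(1) K S0 S1 by auto
  define X0 where "X0 = K * S0 * K"
  define X1 where "X1 = K * S1 * K"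
  define Xm where "Xm = K * ((1/2) \<cdot>\<^sub>m (S0 + S1)) * K"
  have X0: "pd_mat n X0" unfolding X0_def using X_pd[OF K S0] .
  have X1: "pd_mat n X1" unfolding X1_def using X_pd[OF K S1] .
  have X0c: "X0 \<in> carrier_mat n n" and X1c: "X1 \<in> carrier_mat n n" using pd_matD(1) X0 X1 by auto
  have sum: "X0 + X1 = K * (S0 + S1) * K"
    unfolding X0_def X1_def using Kc S0c S1c
    by (simp add: add_mult_distrib_mat[of _ n n] mult_add_distrib_mat[of _ n n] mult_carrier_mat[of _ n n _ n])
  have S01: "S0 + S1 \<in> carrier_mat n n" using S1c by simp
  have KS: "K * (S0 + S1) \<in> carrier_mat n n" using Kc S01 by simp
  have Xm_eq: "Xm = (1/2) \<cdot>\<^sub>m (X0 + X1)" unfolding Xm_def sum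
    using mult_smult_distrib[OF Kc S01, of "1/2"] mult_smult_assoc_mat[OF KS Kc, of "1/2"] by simp
  have Xm: "pd_mat n Xm"
  proof -
    have "pd_mat n ((1/2) \<cdot>\<^sub>m (S0 + S1))" unfolding pd_mat_def
    proof (intro conjI ballI impI)
      show "(1/2) \<cdot>\<^sub>m (S0 + S1) \<in> carrier_mat n n" using S0c S1c by simp
      show "sym_mat ((1/2) \<cdot>\<^sub>m (S0 + S1))" unfolding sym_mat_def
        using pd_matD(2)[OF S0] pd_matD(2)[OF S1] S0c S1c unfolding sym_mat_def
        by (intro eq_matI) (auto, metis index_transpose_mat(1) carrier_matD)
      fix v :: "real vec" assume v: "v \<in> carrier_vec n" "v \<noteq> 0\<^sub>v n"
      have "((1/2) \<cdot>\<^sub>m (S0 + S1)) *\<^sub>v v = (1/2) \<cdot>\<^sub>v (S0 *\<^sub>v v + S1 *\<^sub>v v)"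
        using S0c S1c v by (intro eq_vecI) (auto simp: add_scalar_prod_distrib[of _ n] smult_scalar_prod_distrib[of _ n])
      hence "v \<bullet> (((1/2) \<cdot>\<^sub>m (S0 + S1)) *\<^sub>v v) = (1/2) * (v \<bullet> (S0 *\<^sub>v v) + v \<bullet> (S1 *\<^sub>v v))"
        using S0c S1c v by (simp add: scalar_prod_add_distrib[of _ n])
      thus "v \<bullet> (((1/2) \<cdot>\<^sub>m (S0 + S1)) *\<^sub>v v) > 0" using pd_matD(3)[OF S0 v] pd_matD(3)[OF S1 v] by simp
    qed
    thus ?thesis unfolding Xm_def using X_pd[OF K] by blast
  qed
  define Y where "Y = psd_sqrt Xm"
  have Y: "pd_mat n Y" unfolding Y_def using pd_sqrt[OF Xm] .
  have YY: "Y * Y = Xm" unfolding Y_def using psd_sqrt(2)[OF pd_psd[OF Xm]] .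
  obtain Yi where Yi: "pd_mat n Yi" and YYi: "Y * Yi = 1\<^sub>m n" and YiY: "Yi * Y = 1\<^sub>m n"
    using pd_inv[OF Y] by blast
  have Yc: "Y \<in> carrier_mat n n" and Yic: "Yi \<in> carrier_mat n n" using pd_matD(1) Y Yi by auto
  note i0 = key_ineq[OF Y Yi YYi YiY pd_psd[OF X0]]
  note i1 = key_ineq[OF Y Yi YYi YiY pd_psd[OF X1]]
  have "mtrace (X0 * Yi) + mtrace (X1 * Yi) = mtrace ((X0 + X1) * Yi)"
    using X0c X1c Yic by (simp add: add_mult_distrib_mat[of _ n n] mtrace_add[of _ n])
  also have "X0 + X1 = 2 \<cdot>\<^sub>m Xm" unfolding Xm_eq using X0c X1c by (intro eq_matI) auto
  also have "mtrace ((2 \<cdot>\<^sub>m Xm) * Yi) = 2 * mtrace (Xm * Yi)"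
    using Xm Yic pd_matD(1)[OF Xm] by (simp add: mult_smult_assoc_mat[of _ n n] mtrace_smult[of _ n])
  also have "Xm * Yi = Y" unfolding YY[symmetric] using Yc Yic YYi by simp
  finally have trs: "mtrace (X0 * Yi) + mtrace (X1 * Yi) = 2 * mtrace Y" .
  have "2 * mtrace Y > mtrace (psd_sqrt X0) + mtrace (psd_sqrt X1)"
  proof (rule ccontr)
    assume "\<not> ?thesis"
    hence "mtrace (X0 * Yi) + mtrace Y - 2 * mtrace (psd_sqrt X0) = 0"
      "mtrace (X1 * Yi) + mtrace Y - 2 * mtrace (psd_sqrt X1) = 0" using i0(1) i1(1) trs by linarith+
    hence "psd_sqrt X0 = Y" "psd_sqrt X1 = Y" using i0(2) i1(2) by auto
    hence "X0 = X1" using psd_sqrt(2)[OF pd_psd[OF X0]] psd_sqrt(2)[OF pd_psd[OF X1]] by metis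
    hence "Ki * X0 * Ki = Ki * X1 * Ki" by simp
    moreover have "Ki * X0 * Ki = S0" unfolding X0_def using Kic Kc S0c KiK KKi
      by (simp add: assoc_mult_mat[of _ n n _ n _ n] mult_carrier_mat[of _ n n _ n] flip: assoc_mult_mat[of Ki n n K n "_" n])
    moreover have "Ki * X1 * Ki = S1" unfolding X1_def using Kic Kc S1c KiK KKi
      by (simp add: assoc_mult_mat[of _ n n _ n _ n] mult_carrier_mat[of _ n n _ n] flip: assoc_mult_mat[of Ki n n K n "_" n])
    ultimately show False using ne by simp
  qed
  thus ?thesis unfolding Y_def Xm_def X0_def X1_def K_def .
qed




lemma pd_mid:
  assumes S0: "pd_mat n S0" and S1: "pd_mat n S1"
  shows "pd_mat n ((1/2) \<cdot>\<^sub>m (S0 + S1))"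
proof -
  have S0c: "S0 \<in> carrier_mat n n" and S1c: "S1 \<in> carrier_mat n n" using pd_matD(1) S0 S1 by auto
  show ?thesis unfolding pd_mat_def
  proof (intro conjI ballI impI)
    show "(1/2) \<cdot>\<^sub>m (S0 + S1) \<in> carrier_mat n n" using S0c S1c by simp
    show "sym_mat ((1/2) \<cdot>\<^sub>m (S0 + S1))" unfolding sym_mat_def
      using pd_matD(2)[OF S0] pd_matD(2)[OF S1] S0c S1c unfolding sym_mat_def
      by (intro eq_matI) (auto, metis index_transpose_mat(1) carrier_matD)
    fix v :: "real vec" assume v: "v \<in> carrier_vec n" "v \<noteq> 0\<^sub>v n"
    have "((1/2) \<cdot>\<^sub>m (S0 + S1)) *\<^sub>v v = (1/2) \<cdot>\<^sub>v (S0 *\<^sub>v v + S1 *\<^sub>v v)"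
      using S0c S1c v by (intro eq_vecI) (auto simp: add_scalar_prod_distrib[of _ n] smult_scalar_prod_distrib[of _ n])
    hence "v \<bullet> (((1/2) \<cdot>\<^sub>m (S0 + S1)) *\<^sub>v v) = (1/2) * (v \<bullet> (S0 *\<^sub>v v) + v \<bullet> (S1 *\<^sub>v v))"
      using S0c S1c v by (simp add: scalar_prod_add_distrib[of _ n])
    thus "v \<bullet> (((1/2) \<cdot>\<^sub>m (S0 + S1)) *\<^sub>v v) > 0" using pd_matD(3)[OF S0 v] pd_matD(3)[OF S1 v] by simp
  qed
qed

lemma conj_psd_sqrt:
  assumes X: "psd_mat n X" and Dc: "D \<in> carrier_mat n n" and DD: "D * D = 1\<^sub>m n" and DT: "transpose_mat D = D"
  shows "psd_sqrt (D * X * D) = D * psd_sqrt X * D"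
proof -
  define R where "R = psd_sqrt X"
  have R: "psd_mat n R" and RR: "R * R = X" unfolding R_def using psd_sqrt[OF X] by auto
  have Rc: "R \<in> carrier_mat n n" using psd_matD(1)[OF R] .
  have DXD: "psd_mat n (D * X * D)" using psd_congr[OF X Dc] DT by simp
  have DRD: "psd_mat n (D * R * D)" using psd_congr[OF R Dc] DT by simp
  have "(D * R * D) * (D * R * D) = D * R * (D * D) * R * D"
    using Dc Rc by (simp add: assoc_mult_mat[of _ n n _ n _ n] mult_carrier_mat[of _ n n _ n])
  also have "\<dots> = D * X * D" unfolding DD RR[symmetric] using Dc Rc
    by (simp add: assoc_mult_mat[of _ n n _ n _ n] mult_carrier_mat[of _ n n _ n])
  finally show ?thesis unfolding R_def[symmetric] using psd_sqrt_eq[OF DXD DRD] by simp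
qed

lemma mtrace_conj:
  assumes Dc: "D \<in> carrier_mat n n" and DD: "D * D = 1\<^sub>m n" and M: "M \<in> carrier_mat n n"
  shows "mtrace (D * M * D) = mtrace M"
proof -
  have "mtrace (D * M * D) = mtrace (D * (M * D))" using Dc M by simp
  also have "\<dots> = mtrace ((M * D) * D)" using mtrace_comm[of D n n "M * D"] Dc M by simp
  also have "\<dots> = mtrace M" using Dc M DD by simp
  finally show ?thesis .
qed

lemma wdist_inv:
  assumes C: "pd_mat n C" and S: "pd_mat n S" and Dc: "D \<in> carrier_mat n n" and DD: "D * D = 1\<^sub>m n"
    and DT: "transpose_mat D = D" and DCD: "D * C * D = C"
  shows "wdist C (D * S * D) = wdist C S"
proof -
  define K where "K = psd_sqrt C"
  have K: "psd_mat n K" and KK: "K * K = C" unfolding K_def using psd_sqrt[OF pd_psd[OF C]] by auto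
  have Kc: "K \<in> carrier_mat n n" using psd_matD(1)[OF K] .
  have Sc: "S \<in> carrier_mat n n" using pd_matD(1)[OF S] .
  have DKD: "psd_mat n (D * K * D)" using psd_congr[OF K Dc] DT by simp
  have "(D * K * D) * (D * K * D) = D * K * (D * D) * K * D"
    using Dc Kc by (simp add: assoc_mult_mat[of _ n n _ n _ n] mult_carrier_mat[of _ n n _ n])
  also have "\<dots> = D * C * D" unfolding DD KK[symmetric] using Dc Kc
    by (simp add: assoc_mult_mat[of _ n n _ n _ n] mult_carrier_mat[of _ n n _ n])
  finally have "(D * K * D) * (D * K * D) = C" using DCD by simp
  hence "psd_sqrt C = D * K * D" using psd_sqrt_eq[OF pd_psd[OF C] DKD] by simp
  hence "K = D * K * D" unfolding K_def .
  hence "K * (D * S * D) * K = (D * K * D) * (D * S * D) * (D * K * D)" by simp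
  also have "\<dots> = D * K * (D * D) * S * (D * D) * K * D"
    using Dc Kc Sc by (simp add: assoc_mult_mat[of _ n n _ n _ n] mult_carrier_mat[of _ n n _ n])
  also have "\<dots> = D * (K * S * K) * D" unfolding DD using Dc Kc Sc
    by (simp add: assoc_mult_mat[of _ n n _ n _ n] mult_carrier_mat[of _ n n _ n])
  finally have X: "K * (D * S * D) * K = D * (K * S * K) * D" .
  have Xp: "psd_mat n (K * S * K)" using psd_congr[OF pd_psd[OF S] Kc] psd_matD(2)[OF K]
    unfolding sym_mat_def by simp
  have "mtrace (psd_sqrt (K * (D * S * D) * K)) = mtrace (psd_sqrt (K * S * K))"
    unfolding X conj_psd_sqrt[OF Xp Dc DD DT] using mtrace_conj[OF Dc DD] psd_sqrt_carrier[OF Xp] by simp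
  moreover have "mtrace (D * S * D) = mtrace S" using mtrace_conj[OF Dc DD Sc] .
  ultimately show ?thesis unfolding wdist_def K_def by simp
qed

definition wterm :: "real mat \<Rightarrow> real mat \<Rightarrow> real" where
  "wterm C S = mtrace C + mtrace S - 2 * mtrace (psd_sqrt (psd_sqrt C * S * psd_sqrt C))"

lemma wdist_sq: "pd_mat n C \<Longrightarrow> pd_mat n S \<Longrightarrow> (wdist C S)\<^sup>2 = wterm C S"
  unfolding wdist_def wterm_def using wterm_nonneg by simp

lemma mean_sym:
  assumes mean: "is_wasserstein_mean n N C Cbar" and N: "N \<ge> 1"
    and Cpd: "\<And>i. i < N \<Longrightarrow> pd_mat n (C i)"
    and Dc: "D \<in> carrier_mat n n" and DD: "D * D = 1\<^sub>m n" and DT: "transpose_mat D = D"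
    and DCD: "\<And>i. i < N \<Longrightarrow> D * C i * D = C i"
  shows "D * Cbar * D = Cbar"
proof (rule ccontr)
  assume ne: "D * Cbar * D \<noteq> Cbar"
  have Cb: "pd_mat n Cbar" and mini: "\<And>S. pd_mat n S \<Longrightarrow>
        (\<Sum>i<N. (wdist (C i) Cbar)\<^sup>2) \<le> (\<Sum>i<N. (wdist (C i) S)\<^sup>2)"
    using mean unfolding is_wasserstein_mean_def by auto
  have Cbc: "Cbar \<in> carrier_mat n n" using pd_matD(1)[OF Cb] .
  define S1 where "S1 = D * Cbar * D"
  have inj: "x = 0\<^sub>v n" if x: "x \<in> carrier_vec n" and Dx: "D *\<^sub>v x = 0\<^sub>v n" for x
  proof -
    have "x = (D * D) *\<^sub>v x" unfolding DD using x by simp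
    also have "\<dots> = D *\<^sub>v (D *\<^sub>v x)" using Dc x by simp
    finally show ?thesis using Dx Dc by simp
  qed
  have S1: "pd_mat n S1" unfolding S1_def using pd_congr[OF Cb Dc inj] DT by simp
  have S1c: "S1 \<in> carrier_mat n n" using pd_matD(1)[OF S1] .
  define Sm where "Sm = (1/2) \<cdot>\<^sub>m (Cbar + S1)"
  have Sm: "pd_mat n Sm" unfolding Sm_def using pd_mid[OF Cb S1] .
  have trSm: "mtrace Sm = (mtrace Cbar + mtrace S1) / 2"
    unfolding Sm_def using mtrace_smult[of "Cbar + S1" n "1/2"] mtrace_add[OF Cbc S1c] S1c by simp
  have lt: "wterm (C i) Sm < wterm (C i) Cbar" if i: "i < N" for i
  proof -
    have "wdist (C i) S1 = wdist (C i) Cbar" unfolding S1_def using wdist_inv[OF Cpd[OF i] Cb Dc DD DT DCD[OF i]] .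
    hence eq1: "wterm (C i) S1 = wterm (C i) Cbar"
      using wdist_sq[OF Cpd[OF i] S1] wdist_sq[OF Cpd[OF i] Cb] by metis
    have "Cbar \<noteq> S1" using ne unfolding S1_def by metis
    note sm = strict_mid[OF Cpd[OF i] Cb S1 this]
    define ga where "ga S = mtrace (psd_sqrt (psd_sqrt (C i) * S * psd_sqrt (C i)))" for S
    have h1: "ga Cbar + ga S1 < 2 * ga Sm" using sm unfolding ga_def Sm_def .
    have h2: "wterm (C i) S = mtrace (C i) + mtrace S - 2 * ga S" for S unfolding wterm_def ga_def ..
    from eq1 have e: "mtrace S1 = mtrace Cbar - 2 * ga Cbar + 2 * ga S1" unfolding h2 by simp
    hence e2: "mtrace Sm = mtrace Cbar - ga Cbar + ga S1" using trSm by simp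
    show ?thesis using h1 e2 unfolding h2 by simp
  qed
  have "(\<Sum>i<N. (wdist (C i) Sm)\<^sup>2) < (\<Sum>i<N. (wdist (C i) Cbar)\<^sup>2)"
  proof -
    have "(\<Sum>i<N. (wdist (C i) Sm)\<^sup>2) = (\<Sum>i<N. wterm (C i) Sm)"
      using wdist_sq[OF Cpd Sm] by simp
    also have "\<dots> < (\<Sum>i<N. wterm (C i) Cbar)"
      using N lt by (intro sum_strict_mono) (auto simp: lessThan_empty_iff)
    also have "\<dots> = (\<Sum>i<N. (wdist (C i) Cbar)\<^sup>2)"
      using wdist_sq[OF Cpd Cb] by simp
    finally show ?thesis .
  qed
  thus False using mini[OF Sm] by simp
qed




lemma zero_mult_vec[simp]: "x \<in> carrier_vec b \<Longrightarrow> 0\<^sub>m a b *\<^sub>v x = (0\<^sub>v a :: real vec)"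
  by (intro eq_vecI) (auto simp: scalar_prod_def intro!: sum.neutral)

lemma dmat_pd: "(\<And>i. i < n \<Longrightarrow> f i > 0) \<Longrightarrow> pd_mat n (dmat n f)"
proof -
  assume f: "\<And>i. i < n \<Longrightarrow> f i > 0"
  show ?thesis unfolding pd_mat_def
  proof (intro conjI ballI impI)
    show "dmat n f \<in> carrier_mat n n" "sym_mat (dmat n f)" unfolding sym_mat_def by auto
    fix x :: "real vec" assume x: "x \<in> carrier_vec n" and x0: "x \<noteq> 0\<^sub>v n"
    obtain k where k: "k < n" "x $ k \<noteq> 0" using x x0 by (metis carrier_vecD eq_vecI index_zero_vec)
    have "(\<Sum>i<n. f i * (x $ i)^2) \<ge> f k * (x $ k)^2"
      using k f by (intro member_le_sum) (auto intro!: mult_nonneg_nonneg simp: less_imp_le)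
    moreover have "f k * (x $ k)^2 > 0" using k f by simp
    ultimately show "x \<bullet> (dmat n f *\<^sub>v x) > 0" unfolding dmat_qf[OF x] by linarith
  qed
qed

lemma block_E_pd:
  assumes PQ: "Q \<le> P" and p: "\<And>j. j < Q \<Longrightarrow> p j > 0" and Nm: "pd_mat (P - Q) Nm"
  shows "pd_mat P (block_E P Q p Nm)"
proof -
  define Dg where "Dg = dmat Q p"
  have Dgeq: "mat Q Q (\<lambda>(a, b). if a = b then p a else 0) = Dg" unfolding Dg_def dmat_def ..
  have Dg: "pd_mat Q Dg" unfolding Dg_def using dmat_pd p by blast
  have Dgc: "Dg \<in> carrier_mat Q Q" unfolding Dg_def by simp
  have Nc: "Nm \<in> carrier_mat (P - Q) (P - Q)" using pd_matD(1)[OF Nm] .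
  have E: "block_E P Q p Nm = four_block_mat Dg (0\<^sub>m Q (P - Q)) (0\<^sub>m (P - Q) Q) Nm"
    unfolding block_E_def Dgeq ..
  have PP: "P = Q + (P - Q)" using PQ by simp
  have Ec: "block_E P Q p Nm \<in> carrier_mat P P" unfolding E using Dgc Nc
    by (metis PP four_block_carrier_mat)
  show ?thesis unfolding pd_mat_def
  proof (intro conjI)
    show "block_E P Q p Nm \<in> carrier_mat P P" by (fact Ec)
    show "sym_mat (block_E P Q p Nm)" unfolding sym_mat_def E
      using transpose_four_block_mat[OF Dgc _ _ Nc] pd_matD(2)[OF Dg] pd_matD(2)[OF Nm]
      unfolding sym_mat_def by simp
    have "\<forall>x \<in> carrier_vec (Q + (P - Q)). x \<noteq> 0\<^sub>v (Q + (P - Q)) \<longrightarrow> x \<bullet> (block_E P Q p Nm *\<^sub>v x) > 0"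
    proof (subst all_vec_append, intro ballI impI)
      fix x1 x2 :: "real vec" assume x1: "x1 \<in> carrier_vec Q" and x2: "x2 \<in> carrier_vec (P - Q)"
        and ne: "x1 @\<^sub>v x2 \<noteq> 0\<^sub>v (Q + (P - Q))"
      have ev: "block_E P Q p Nm *\<^sub>v (x1 @\<^sub>v x2) = (Dg *\<^sub>v x1) @\<^sub>v (Nm *\<^sub>v x2)"
        unfolding E using four_block_mat_mult_vec[OF Dgc _ _ Nc x1 x2, of "0\<^sub>m Q (P - Q)" "0\<^sub>m (P - Q) Q"] x1 x2 Dgc Nc
        by simp
      have qf: "(x1 @\<^sub>v x2) \<bullet> (block_E P Q p Nm *\<^sub>v (x1 @\<^sub>v x2)) = x1 \<bullet> (Dg *\<^sub>v x1) + x2 \<bullet> (Nm *\<^sub>v x2)"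
        unfolding ev using x1 x2 Dgc Nc by (intro scalar_prod_append) auto
      have z: "0\<^sub>v (Q + (P - Q)) = 0\<^sub>v Q @\<^sub>v 0\<^sub>v (P - Q)" by (intro eq_vecI) auto
      have "x1 \<noteq> 0\<^sub>v Q \<or> x2 \<noteq> 0\<^sub>v (P - Q)" using ne unfolding z using x1 by auto
      moreover have "x1 \<bullet> (Dg *\<^sub>v x1) \<ge> 0" using psd_matD(3)[OF pd_psd[OF Dg] x1] .
      moreover have "x2 \<bullet> (Nm *\<^sub>v x2) \<ge> 0" using psd_matD(3)[OF pd_psd[OF Nm] x2] .
      moreover have "x1 \<noteq> 0\<^sub>v Q \<Longrightarrow> x1 \<bullet> (Dg *\<^sub>v x1) > 0" using pd_matD(3)[OF Dg x1] by simp
      moreover have "x2 \<noteq> 0\<^sub>v (P - Q) \<Longrightarrow> x2 \<bullet> (Nm *\<^sub>v x2) > 0" using pd_matD(3)[OF Nm x2] by simp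
      ultimately show "(x1 @\<^sub>v x2) \<bullet> (block_E P Q p Nm *\<^sub>v (x1 @\<^sub>v x2)) > 0" unfolding qf by linarith
    qed
    thus "\<forall>v\<in>carrier_vec P. v \<noteq> 0\<^sub>v P \<longrightarrow> 0 < v \<bullet> (block_E P Q p Nm *\<^sub>v v)" using PP by metis
  qed
qed

lemma block_E_entry:
  assumes PQ: "Q \<le> P" and Nc: "Nm \<in> carrier_mat (P - Q) (P - Q)" and a: "a < P" and b: "b < P"
  shows "block_E P Q p Nm $$ (a,b) = (if a < Q \<or> b < Q then (if a = b then p a else 0) else Nm $$ (a - Q, b - Q))"
  unfolding block_E_def using assms by auto

lemma dmat_conj_entry:
  assumes M: "(M :: real mat) \<in> carrier_mat n n" and a: "a < n" and b: "b < n"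
  shows "(dmat n s * M * dmat n s) $$ (a,b) = s a * M $$ (a,b) * s b"
proof -
  have r: "(dmat n s * M) $$ (a,k) = s a * M $$ (a,k)" if k: "k < n" for k
  proof -
    have "(dmat n s * M) $$ (a,k) = (\<Sum>l\<in>{0..<n}. dmat n s $$ (a,l) * M $$ (l,k))"
      using a k M by (simp add: scalar_prod_def)
    also have "\<dots> = dmat n s $$ (a,a) * M $$ (a,k)" by (rule sum_single) (insert a k, auto)
    finally show ?thesis using a by simp
  qed
  have "(dmat n s * M * dmat n s) $$ (a,b) = (\<Sum>l\<in>{0..<n}. (dmat n s * M) $$ (a,l) * dmat n s $$ (l,b))"
    using a b M by (simp add: scalar_prod_def)
  also have "\<dots> = (dmat n s * M) $$ (a,b) * dmat n s $$ (b,b)" by (rule sum_single) (insert a b, auto)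
  finally show ?thesis using r[OF b] b by simp
qed

lemma T_unique:
  assumes T1: "psd_mat n T1" and T2: "psd_mat n T2" and Cb: "pd_mat n Cb"
    and eq: "T1 * Cb * T1 = T2 * Cb * T2"
  shows "T1 = T2"
proof -
  define G where "G = psd_sqrt Cb"
  obtain Gi where G: "pd_mat n G" and GG: "G * G = Cb" and Gic: "Gi \<in> carrier_mat n n"
    and GGi: "G * Gi = 1\<^sub>m n" and GiG: "Gi * G = 1\<^sub>m n" using sqrt_setup[OF Cb] unfolding G_def by blast
  have Gc: "G \<in> carrier_mat n n" using pd_matD(1)[OF G] .
  have GT: "transpose_mat G = G" using pd_matD(2)[OF G] unfolding sym_mat_def .
  have T1c: "T1 \<in> carrier_mat n n" and T2c: "T2 \<in> carrier_mat n n" using psd_matD(1) T1 T2 by auto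
  have p1: "psd_mat n (G * T1 * G)" using psd_congr[OF T1 Gc] GT by simp
  have p2: "psd_mat n (G * T2 * G)" using psd_congr[OF T2 Gc] GT by simp
  have sq: "(G * T * G) * (G * T * G) = G * (T * Cb * T) * G" if "T \<in> carrier_mat n n" for T
    unfolding GG[symmetric] using that Gc
    by (simp add: assoc_mult_mat[of _ n n _ n _ n] mult_carrier_mat[of _ n n _ n])
  have "G * T1 * G = G * T2 * G" using sqrt_unique[OF p1 p2] sq[OF T1c] sq[OF T2c] eq by simp
  hence "Gi * (G * T1 * G) * Gi = Gi * (G * T2 * G) * Gi" by simp
  moreover have "Gi * (G * T * G) * Gi = T" if "T \<in> carrier_mat n n" for T
  proof -
    have "Gi * (G * T * G) * Gi = (Gi * G) * T * (G * Gi)" using that Gc Gic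
      by (simp add: assoc_mult_mat[of _ n n _ n _ n] mult_carrier_mat[of _ n n _ n])
    thus ?thesis using GiG GGi that by simp
  qed
  ultimately show ?thesis using T1c T2c by metis
qed

lemma triple_entry:
  assumes X: "(X :: real mat) \<in> carrier_mat n n" and Z: "Z \<in> carrier_mat n n" and Y: "Y \<in> carrier_mat n n"
    and j: "j < n"
  shows "(X * Z * Y) $$ (j,j) = (\<Sum>a<n. \<Sum>b<n. X $$ (j,a) * Z $$ (a,b) * Y $$ (b,j))"
proof -
  have "(X * Z * Y) $$ (j,j) = (\<Sum>b<n. (X * Z) $$ (j,b) * Y $$ (b,j))"
    using X Z Y j by (simp add: scalar_prod_def lessThan_atLeast0 del: assoc_mult_mat)
  also have "\<dots> = (\<Sum>b<n. (\<Sum>a<n. X $$ (j,a) * Z $$ (a,b)) * Y $$ (b,j))"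
    using X Z Y j by (intro sum.cong refl) (simp add: scalar_prod_def lessThan_atLeast0)
  also have "\<dots> = (\<Sum>b<n. \<Sum>a<n. X $$ (j,a) * Z $$ (a,b) * Y $$ (b,j))"
    by (simp add: sum_distrib_right)
  also have "\<dots> = (\<Sum>a<n. \<Sum>b<n. X $$ (j,a) * Z $$ (a,b) * Y $$ (b,j))" by (rule sum.swap)
  finally show ?thesis .
qed

lemma sum_div_mod:
  fixes m n :: nat
  shows "(\<Sum>k<m * n. f (k div n) (k mod n)) = (\<Sum>a<m. \<Sum>b<n. (f a b :: real))"
proof (induction m)
  case 0 thus ?case by simp
next
  case (Suc m)
  have "{..<Suc m * n} = {..<m * n} \<union> {m * n..<m * n + n}" by auto
  hence "(\<Sum>k<Suc m * n. f (k div n) (k mod n)) = (\<Sum>k<m * n. f (k div n) (k mod n)) + (\<Sum>k\<in>{m * n..<m * n + n}. f (k div n) (k mod n))"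
    by (simp add: sum.union_disjoint ivl_disj_int)
  also have "(\<Sum>k\<in>{m * n..<m * n + n}. f (k div n) (k mod n)) = (\<Sum>b<n. f m b)"
  proof -
    have "(\<Sum>k\<in>{m * n..<m * n + n}. f (k div n) (k mod n)) = (\<Sum>b<n. f ((m*n + b) div n) ((m*n + b) mod n))"
    proof -
      have e: "{m * n..<m * n + n} = {0 + m * n..<n + m * n}" by (simp add: add.commute)
      show ?thesis unfolding e sum.shift_bounds_nat_ivl by (simp add: lessThan_atLeast0 add.commute)
    qed
    also have "\<dots> = (\<Sum>b<n. f m b)" by (intro sum.cong refl) auto
    finally show ?thesis .
  qed
  finally show ?case using Suc by simp
qed




definition Jm :: "nat \<Rightarrow> nat \<Rightarrow> real mat" where
  "Jm P j = dmat P (\<lambda>k. if k = j then -1 else 1)"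

lemma Jm_carrier[simp]: "Jm P j \<in> carrier_mat P P" unfolding Jm_def by simp
lemma Jm_dim[simp]: "dim_row (Jm P j) = P" "dim_col (Jm P j) = P" unfolding Jm_def by auto
lemma Jm_T[simp]: "transpose_mat (Jm P j) = Jm P j" unfolding Jm_def by simp
lemma Jm_sq: "Jm P j * Jm P j = 1\<^sub>m P" unfolding Jm_def dmat_mult by (intro eq_matI) auto

lemma Jm_conj_entry:
  assumes M: "M \<in> carrier_mat P P" and a: "a < P" and b: "b < P"
  shows "(Jm P j * M * Jm P j) $$ (a,b) = (if a = j then -1 else 1) * M $$ (a,b) * (if b = j then -1 else 1)"
  unfolding Jm_def using dmat_conj_entry[OF M a b] by simp

lemma Jm_fix_zero:
  assumes M: "M \<in> carrier_mat P P" and fx: "Jm P j * M * Jm P j = M" and j: "j < P" and b: "b < P" and bj: "b \<noteq> j"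
  shows "M $$ (j,b) = 0" "M $$ (b,j) = 0"
proof -
  have "M $$ (j,b) = - M $$ (j,b)" using Jm_conj_entry[OF M j b, of j] fx bj by simp
  thus "M $$ (j,b) = 0" by simp
  have "M $$ (b,j) = - M $$ (b,j)" using Jm_conj_entry[OF M b j, of j] fx bj by simp
  thus "M $$ (b,j) = 0" by simp
qed

lemma JEJ:
  assumes PQ: "Q \<le> P" and Nc: "Nm \<in> carrier_mat (P - Q) (P - Q)" and j: "j < Q"
  shows "Jm P j * block_E P Q pp Nm * Jm P j = block_E P Q pp Nm"
proof -
  have PP: "P = Q + (P - Q)" using PQ by simp
  have "block_E P Q pp Nm \<in> carrier_mat (Q + (P - Q)) (Q + (P - Q))" unfolding block_E_def
    by (rule four_block_carrier_mat[OF _ Nc]) simp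
  hence Ec: "block_E P Q pp Nm \<in> carrier_mat P P" using PP by simp
  show ?thesis
  proof (rule eq_matI)
    fix a b assume "a < dim_row (block_E P Q pp Nm)" "b < dim_col (block_E P Q pp Nm)"
    hence a: "a < P" and b: "b < P" using Ec by auto
    show "(Jm P j * block_E P Q pp Nm * Jm P j) $$ (a,b) = block_E P Q pp Nm $$ (a,b)"
      unfolding Jm_conj_entry[OF Ec a b] block_E_entry[OF PQ Nc a b] using j
      by (cases "a = j"; cases "b = j") auto
  qed (use Ec in auto)
qed

lemma cancel_l: "X \<in> carrier_mat n n \<Longrightarrow> Y \<in> carrier_mat n n \<Longrightarrow> Z \<in> carrier_mat n m \<Longrightarrow> X * Y = 1\<^sub>m n \<Longrightarrow> X * (Y * Z) = (Z :: real mat)"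
  by (metis assoc_mult_mat left_mult_one_mat)

lemma orth_A_facts:
  assumes "orth_mat P A"
  shows "A \<in> carrier_mat P P" "transpose_mat A \<in> carrier_mat P P" "A * transpose_mat A = 1\<^sub>m P"
    "transpose_mat A * A = 1\<^sub>m P"
  using assms unfolding orth_mat_def by auto


lemma D_facts:
  assumes A: "orth_mat P A"
  shows "A * Jm P j * transpose_mat A \<in> carrier_mat P P"
    "(A * Jm P j * transpose_mat A) * (A * Jm P j * transpose_mat A) = 1\<^sub>m P"
    "transpose_mat (A * Jm P j * transpose_mat A) = A * Jm P j * transpose_mat A"
proof -
  note a = orth_A_facts[OF A]
  note c = cancel_l[where m=P, OF a(2) a(1) _ a(4)] cancel_l[where m=P, OF a(1) a(2) _ a(3)]
  have J: "Jm P j \<in> carrier_mat P P" by simp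
  show "A * Jm P j * transpose_mat A \<in> carrier_mat P P" using a J by (simp add: assoc_mult_mat[of _ P P _ P _ P] mult_carrier_mat[of _ P P _ P])
  have "(A * Jm P j * transpose_mat A) * (A * Jm P j * transpose_mat A) = A * ((Jm P j * Jm P j) * transpose_mat A)"
    using a J by (simp add: assoc_mult_mat[of _ P P _ P _ P] mult_carrier_mat[of _ P P _ P] c)
  thus "(A * Jm P j * transpose_mat A) * (A * Jm P j * transpose_mat A) = 1\<^sub>m P"
    unfolding Jm_sq using a by simp
  have "transpose_mat (A * Jm P j * transpose_mat A) = transpose_mat (transpose_mat A) * transpose_mat (A * Jm P j)"
    using a J by (intro transpose_mult[of _ P P]) (auto simp: assoc_mult_mat[of _ P P _ P _ P] mult_carrier_mat[of _ P P _ P])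
  also have "transpose_mat (A * Jm P j) = Jm P j * transpose_mat A"
    using a J transpose_mult[of A P P "Jm P j" P] by simp
  finally show "transpose_mat (A * Jm P j * transpose_mat A) = A * Jm P j * transpose_mat A"
    using a J by (simp add: assoc_mult_mat[of _ P P _ P _ P] mult_carrier_mat[of _ P P _ P])
qed

lemma DXD:
  assumes A: "orth_mat P A" and X: "X \<in> carrier_mat P P"
  shows "(A * Jm P j * transpose_mat A) * (A * X * transpose_mat A) * (A * Jm P j * transpose_mat A)
     = A * (Jm P j * X * Jm P j) * transpose_mat A"
proof -
  note a = orth_A_facts[OF A]
  note c = cancel_l[where m=P, OF a(2) a(1) _ a(4)] cancel_l[where m=P, OF a(1) a(2) _ a(3)]
  have J: "Jm P j \<in> carrier_mat P P" by simp
  show ?thesis using a J X by (simp add: assoc_mult_mat[of _ P P _ P _ P] mult_carrier_mat[of _ P P _ P] c)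
qed

lemma AT_D_A:
  assumes A: "orth_mat P A" and X: "X \<in> carrier_mat P P"
  shows "transpose_mat A * ((A * Jm P j * transpose_mat A) * X * (A * Jm P j * transpose_mat A)) * A
     = Jm P j * (transpose_mat A * X * A) * Jm P j"
proof -
  note a = orth_A_facts[OF A]
  note c = cancel_l[where m=P, OF a(2) a(1) _ a(4)] cancel_l[where m=P, OF a(1) a(2) _ a(3)]
  have J: "Jm P j \<in> carrier_mat P P" by simp
  show ?thesis using a J X by (simp add: assoc_mult_mat[of _ P P _ P _ P] mult_carrier_mat[of _ P P _ P] c)
qed




lemma orthF:
  assumes "orth_mat P U"
  shows "U \<in> carrier_mat P P" "transpose_mat U \<in> carrier_mat P P" "U * transpose_mat U = 1\<^sub>m P"
    "transpose_mat U * U = 1\<^sub>m P"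
    "\<And>Z. Z \<in> carrier_mat P P \<Longrightarrow> U * (transpose_mat U * Z) = Z"
    "\<And>Z. Z \<in> carrier_mat P P \<Longrightarrow> transpose_mat U * (U * Z) = Z"
  using assms unfolding orth_mat_def by (auto intro: cancel_l)

lemma entry2:
  assumes X: "(X :: real mat) \<in> carrier_mat n n" and Y: "Y \<in> carrier_mat n n" and j: "j < n"
  shows "(X * Y) $$ (j,j) = (\<Sum>a<n. X $$ (j,a) * Y $$ (a,j))"
  using X Y j by (simp add: scalar_prod_def lessThan_atLeast0)

lemma per_i:
  fixes A Cb Ybar W Yi U Sg V Nm :: "real mat" and pp :: "nat \<Rightarrow> real"
  assumes A: "orth_mat P A" and PQ: "Q \<le> P"
    and Cb: "pd_mat P Cb" and Ybc: "Ybar \<in> carrier_mat P P" and YY: "Ybar * transpose_mat Ybar = Cb"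
    and Wc: "W \<in> carrier_mat P P" and YW: "transpose_mat Ybar * W = 1\<^sub>m P" and WY: "W * transpose_mat Ybar = 1\<^sub>m P"
    and Yic: "Yi \<in> carrier_mat P P" and Nc: "Nm \<in> carrier_mat (P - Q) (P - Q)"
    and YiY: "Yi * transpose_mat Yi = A * block_E P Q pp Nm * transpose_mat A"
    and U: "orth_mat P U" and V: "orth_mat P V"
    and Sgc: "Sg \<in> carrier_mat P P" and Sgd: "diagonal_mat Sg" and Sgn: "\<forall>k<P. Sg $$ (k,k) \<ge> 0"
    and svd: "transpose_mat Ybar * Yi = U * Sg * transpose_mat V"
    and DCb: "\<And>j. j < Q \<Longrightarrow> (A * Jm P j * transpose_mat A) * Cb * (A * Jm P j * transpose_mat A) = Cb"
    and j: "j < Q"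
  shows "(transpose_mat A * (Yi * (V * transpose_mat U)) * (transpose_mat Ybar * A)) $$ (j,j)
           = sqrt (pp j) * sqrt ((transpose_mat A * Cb * A) $$ (j,j))"
proof -
  note ms = assoc_mult_mat[of _ P P _ P _ P] mult_carrier_mat[of _ P P _ P]
  note a = orthF[OF A] and u = orthF[OF U] and v = orthF[OF V]
  have jP: "j < P" using j PQ by simp
  define E where "E = block_E P Q pp Nm"
  have PP: "P = Q + (P - Q)" using PQ by simp
  have "E \<in> carrier_mat (Q + (P - Q)) (Q + (P - Q))" unfolding E_def block_E_def
    by (rule four_block_carrier_mat[OF _ Nc]) simp
  hence Ec: "E \<in> carrier_mat P P" using PP by simp
  define C where "C = A * E * transpose_mat A"
  have Cc: "C \<in> carrier_mat P P" unfolding C_def using a Ec by (simp add: ms)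
  have Cbc: "Cb \<in> carrier_mat P P" using pd_matD(1)[OF Cb] .
  have YbTc: "transpose_mat Ybar \<in> carrier_mat P P" using Ybc by simp
  have WTc: "transpose_mat W \<in> carrier_mat P P" using Wc by simp
  have YiTc: "transpose_mat Yi \<in> carrier_mat P P" using Yic by simp
  define M where "M = Yi * (V * transpose_mat U)"
  have Mc: "M \<in> carrier_mat P P" unfolding M_def using Yic u v by (simp add: ms)
  have MT: "transpose_mat M = U * (transpose_mat V * transpose_mat Yi)"
  proof -
    have "transpose_mat M = transpose_mat (V * transpose_mat U) * transpose_mat Yi"
      unfolding M_def using Yic u v by (intro transpose_mult[of _ P P]) (auto simp: ms)
    also have "transpose_mat (V * transpose_mat U) = U * transpose_mat V"
      using transpose_mult[of V P P "transpose_mat U" P] u v by simp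
    finally show ?thesis using u v YiTc by (simp add: ms)
  qed
  have MTc: "transpose_mat M \<in> carrier_mat P P" using Mc by simp
  have MMT: "M * transpose_mat M = C"
  proof -
    have "M * transpose_mat M = Yi * (V * transpose_mat U) * (U * (transpose_mat V * transpose_mat Yi))"
      unfolding MT unfolding M_def ..
    also have "\<dots> = Yi * transpose_mat Yi" using Yic u v YiTc by (simp add: ms)
    finally show ?thesis unfolding YiY C_def E_def .
  qed
  define S where "S = U * Sg * transpose_mat U"
  have SM: "transpose_mat Ybar * M = S"
  proof -
    have "transpose_mat Ybar * M = (transpose_mat Ybar * Yi) * (V * transpose_mat U)"
      unfolding M_def using YbTc Yic u v by (simp add: ms)
    also have "\<dots> = S" unfolding svd S_def using u v Sgc by (simp add: ms)
    finally show ?thesis .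
  qed
  have Sgp: "psd_mat P Sg" using diagonal_dmat[OF Sgc Sgd] dmat_psd[of P "\<lambda>k. Sg $$ (k,k)"] Sgn by metis
  have Sp: "psd_mat P S" unfolding S_def using psd_congr[OF Sgp u(2)] by simp
  have Sc: "S \<in> carrier_mat P P" using psd_matD(1)[OF Sp] .
  define T where "T = W * S * transpose_mat W"
  have Tp: "psd_mat P T" unfolding T_def using psd_congr[OF Sp WTc] by simp
  have Tc: "T \<in> carrier_mat P P" using psd_matD(1)[OF Tp] .
  have TM: "T = M * transpose_mat W"
  proof -
    have "T = (W * transpose_mat Ybar) * M * transpose_mat W" unfolding T_def SM[symmetric]
      using Wc YbTc Mc WTc by (simp add: ms)
    thus ?thesis using WY Mc WTc by simp
  qed
  have TT: "transpose_mat T = T" using psd_matD(2)[OF Tp] unfolding sym_mat_def .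
  have TM2: "T = W * transpose_mat M"
  proof -
    have "transpose_mat T = transpose_mat (transpose_mat W) * transpose_mat M"
      unfolding TM using Mc WTc by (intro transpose_mult[of _ P P])
    thus ?thesis using TT by simp
  qed
  have WTY: "transpose_mat W * Ybar = 1\<^sub>m P"
  proof -
    have "transpose_mat (transpose_mat Ybar * W) = transpose_mat W * Ybar"
      using transpose_mult[OF YbTc Wc] by simp
    thus ?thesis using YW by simp
  qed
  have TCT: "T * Cb * T = C"
  proof -
    have "T * Cb * T = M * (transpose_mat W * Ybar) * (transpose_mat Ybar * W) * transpose_mat M"
      unfolding YY[symmetric] using Mc WTc Ybc YbTc Wc MTc
      by (subst (1) TM, subst TM2) (simp add: ms)
    also have "\<dots> = M * transpose_mat M" unfolding WTY YW using Mc MTc by simp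
    finally show ?thesis unfolding MMT .
  qed
  have TCb: "M * transpose_mat Ybar = T * Cb"
  proof -
    have "T * Cb = M * (transpose_mat W * Ybar) * transpose_mat Ybar"
      unfolding TM YY[symmetric] using Mc WTc Ybc YbTc by (simp add: ms)
    thus ?thesis unfolding WTY using Mc YbTc by simp
  qed
  define D where "D = A * Jm P j * transpose_mat A"
  note df = D_facts[OF A, of j, folded D_def]
  have Dc: "D \<in> carrier_mat P P" using df(1) .
  have JEJ': "Jm P j * E * Jm P j = E" unfolding E_def by (rule JEJ[OF PQ Nc j])
  have DCD: "D * C * D = C" unfolding C_def D_def DXD[OF A Ec] JEJ' ..
  have DCbD: "D * Cb * D = Cb" unfolding D_def using DCb[OF j] .
  have T'p: "psd_mat P (D * T * D)" using psd_congr[OF Tp Dc] df(3) by simp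
  have "(D * T * D) * Cb * (D * T * D) = D * T * (D * Cb * D) * T * D"
    using Dc Tc Cbc by (simp add: ms)
  also have "\<dots> = D * (T * Cb * T) * D" unfolding DCbD using Dc Tc Cbc by (simp add: ms)
  also have "\<dots> = T * Cb * T" unfolding TCT DCD ..
  finally have "D * T * D = T" using T_unique[OF T'p Tp Cb] by blast
  define Tpp where "Tpp = transpose_mat A * T * A"
  have Tppc: "Tpp \<in> carrier_mat P P" unfolding Tpp_def using a Tc by (simp add: ms)
  have Tppp: "psd_mat P Tpp" unfolding Tpp_def using psd_congr[OF Tp a(1)] .
  have JT: "Jm P j * Tpp * Jm P j = Tpp"
    unfolding Tpp_def AT_D_A[OF A Tc, of j, symmetric, folded D_def] \<open>D * T * D = T\<close> ..
  note z = Jm_fix_zero[OF Tppc JT jP]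
  define Bm where "Bm = transpose_mat A * Cb * A"
  have inj: "x = 0\<^sub>v P" if x: "x \<in> carrier_vec P" and Ax: "A *\<^sub>v x = 0\<^sub>v P" for x
  proof -
    have "x = (transpose_mat A * A) *\<^sub>v x" using a x by simp
    also have "\<dots> = transpose_mat A *\<^sub>v (A *\<^sub>v x)" using a x by (intro assoc_mult_mat_vec[of _ P P _ P]) auto
    finally show ?thesis using Ax a by simp
  qed
  have Bp: "pd_mat P Bm" unfolding Bm_def using pd_congr[OF Cb a(1) inj] .
  have Bmc: "Bm \<in> carrier_mat P P" using pd_matD(1)[OF Bp] .
  have bpos: "Bm $$ (j,j) > 0"
    using diag_entry_qf[OF Bmc jP] pd_matD(3)[OF Bp, of "unit_vec P j"] jP by simp
  have tnn: "Tpp $$ (j,j) \<ge> 0"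
    using diag_entry_qf[OF Tppc jP] psd_matD(3)[OF Tppp, of "unit_vec P j"] by simp
  have ETBT: "E = Tpp * Bm * Tpp"
  proof -
    have "E = transpose_mat A * C * A" unfolding C_def using a Ec by (simp add: ms)
    also have "\<dots> = transpose_mat A * (T * Cb * T) * A" unfolding TCT ..
    also have "\<dots> = Tpp * Bm * Tpp" unfolding Tpp_def Bm_def using a Tc Cbc by (simp add: ms)
    finally show ?thesis .
  qed
  have Ejj: "E $$ (j,j) = pp j" unfolding E_def using block_E_entry[OF PQ Nc jP jP] j by simp
  have "(Tpp * Bm * Tpp) $$ (j,j) = (\<Sum>a<P. \<Sum>b<P. Tpp $$ (j,a) * Bm $$ (a,b) * Tpp $$ (b,j))"
    using triple_entry[OF Tppc Bmc Tppc jP] .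
  also have "\<dots> = (\<Sum>b<P. Tpp $$ (j,j) * Bm $$ (j,b) * Tpp $$ (b,j))"
    by (rule sum_single) (use jP z in auto)
  also have "\<dots> = Tpp $$ (j,j) * Bm $$ (j,j) * Tpp $$ (j,j)"
    by (rule sum_single) (use jP z in auto)
  finally have ppj: "pp j = Tpp $$ (j,j) * Bm $$ (j,j) * Tpp $$ (j,j)" using ETBT Ejj by simp
  have target: "transpose_mat A * M * (transpose_mat Ybar * A) = Tpp * Bm"
  proof -
    have "transpose_mat A * M * (transpose_mat Ybar * A) = transpose_mat A * (M * transpose_mat Ybar) * A"
      using a Mc YbTc by (simp add: ms)
    also have "\<dots> = transpose_mat A * (T * Cb) * A" unfolding TCb ..
    also have "\<dots> = Tpp * Bm" unfolding Tpp_def Bm_def using a Tc Cbc by (simp add: ms)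
    finally show ?thesis .
  qed
  have "(Tpp * Bm) $$ (j,j) = (\<Sum>a<P. Tpp $$ (j,a) * Bm $$ (a,j))" using entry2[OF Tppc Bmc jP] .
  also have "\<dots> = Tpp $$ (j,j) * Bm $$ (j,j)" by (rule sum_single) (use jP z in auto)
  finally have tb: "(Tpp * Bm) $$ (j,j) = Tpp $$ (j,j) * Bm $$ (j,j)" .
  have "sqrt (pp j) = Tpp $$ (j,j) * sqrt (Bm $$ (j,j))"
    unfolding ppj using tnn bpos by (simp add: real_sqrt_mult power2_eq_square[symmetric] ac_simps)
  hence "Tpp $$ (j,j) * Bm $$ (j,j) = sqrt (pp j) * sqrt (Bm $$ (j,j))"
    using bpos by (simp add: ac_simps)
  thus ?thesis using target tb unfolding M_def Bm_def by simp
qed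




lemma lin_repr:
  fixes M Ybar :: "real mat" and w :: "nat \<Rightarrow> nat \<Rightarrow> real"
  assumes Mc: "M \<in> carrier_mat P P" and Yc: "Ybar \<in> carrier_mat P P"
  shows "vec (P * P) (\<lambda>k. w (k div P) (k mod P)) \<bullet> mvec (M - Ybar) + (\<Sum>a<P. \<Sum>b<P. w a b * Ybar $$ (a,b))
     = (\<Sum>a<P. \<Sum>b<P. w a b * M $$ (a,b))"
proof -
  have d: "dim_row (M - Ybar) = P" "dim_col (M - Ybar) = P" using Mc Yc by auto
  have "vec (P * P) (\<lambda>k. w (k div P) (k mod P)) \<bullet> mvec (M - Ybar)
      = (\<Sum>k<P * P. w (k div P) (k mod P) * (M $$ (k div P, k mod P) - Ybar $$ (k div P, k mod P)))"
    unfolding mvec_def d scalar_prod_def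
  proof (simp add: lessThan_atLeast0, intro sum.cong refl)
    fix k assume k: "k \<in> {0..<P * P}"
    hence P0: "P > 0" by (cases P) auto
    have "k div P < P" using k by (simp add: less_mult_imp_div_less)
    moreover have "k mod P < P" using P0 by simp
    ultimately show "w (k div P) (k mod P) * (M - Ybar) $$ (k div P, k mod P) =
      w (k div P) (k mod P) * (M $$ (k div P, k mod P) - Ybar $$ (k div P, k mod P))"
      using Mc Yc by simp
  qed
  also have "\<dots> = (\<Sum>a<P. \<Sum>b<P. w a b * (M $$ (a,b) - Ybar $$ (a,b)))"
    by (rule sum_div_mod)
  finally show ?thesis by (simp add: algebra_simps sum_subtractf)
qed

theorem proposition3:
  fixes P Q N :: nat
    and A :: "real mat"
    and p :: "nat \<Rightarrow> nat \<Rightarrow> real"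
    and Nm :: "nat \<Rightarrow> real mat"
    and \<alpha> :: "nat \<Rightarrow> real"
    and Cbar Ybar :: "real mat"
    and Y U \<Sigma> V :: "nat \<Rightarrow> real mat"
  assumes "P > Q" and "Q \<ge> 1" and "N \<ge> 1"
    and "orth_mat P A"
    and "\<And>i j. i < N \<Longrightarrow> j < Q \<Longrightarrow> p i j > 0"
    and "\<And>i. i < N \<Longrightarrow> pd_mat (P - Q) (Nm i)"
    and "is_wasserstein_mean P N
           (\<lambda>i. A * block_E P Q (p i) (Nm i) * transpose_mat A) Cbar"
    and "Ybar \<in> carrier_mat P P" and "Ybar * transpose_mat Ybar = Cbar"
    and "\<And>i. i < N \<Longrightarrow> Y i \<in> carrier_mat P P"
    and "\<And>i. i < N \<Longrightarrow>
           Y i * transpose_mat (Y i) = A * block_E P Q (p i) (Nm i) * transpose_mat A"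
    and "\<And>i. i < N \<Longrightarrow> orth_mat P (U i)"
    and "\<And>i. i < N \<Longrightarrow> orth_mat P (V i)"
    and "\<And>i. i < N \<Longrightarrow> \<Sigma> i \<in> carrier_mat P P \<and> diagonal_mat (\<Sigma> i)
           \<and> (\<forall>k<P. \<Sigma> i $$ (k, k) \<ge> 0)"
    and "\<And>i. i < N \<Longrightarrow>
           transpose_mat Ybar * Y i = U i * \<Sigma> i * transpose_mat (V i)"
  shows "\<exists>\<beta> \<in> carrier_vec (P * P). \<exists>c::real. \<forall>i<N.
           (\<Sum>j<Q. \<alpha> j * sqrt (p i j))
             = \<beta> \<bullet> mvec (Y i * (V i * transpose_mat (U i)) - Ybar) + c"
proof -
  have PQ: "Q \<le> P" using assms(1) by simp
  note a = orthF[OF assms(4)]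
  have Nc: "Nm i \<in> carrier_mat (P - Q) (P - Q)" if "i < N" for i using pd_matD(1)[OF assms(6)[OF that]] .
  define C where "C = (\<lambda>i. A * block_E P Q (p i) (Nm i) * transpose_mat A)"
  have injT: "x = 0\<^sub>v P" if x: "x \<in> carrier_vec P" and Ax: "transpose_mat A *\<^sub>v x = 0\<^sub>v P" for x
  proof -
    have "x = (A * transpose_mat A) *\<^sub>v x" using a x by simp
    also have "\<dots> = A *\<^sub>v (transpose_mat A *\<^sub>v x)" using a x by (intro assoc_mult_mat_vec[of _ P P _ P]) auto
    finally show ?thesis using Ax a by simp
  qed
  have Cpd: "pd_mat P (C i)" if i: "i < N" for i
  proof -
    have E: "pd_mat P (block_E P Q (p i) (Nm i))"
      using block_E_pd[OF PQ _ assms(6)[OF i]] assms(5)[OF i] by blast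
    show ?thesis unfolding C_def using pd_congr[OF E a(2) injT] by simp
  qed
  have mean: "is_wasserstein_mean P N C Cbar" unfolding C_def using assms(7) .
  have Cb: "pd_mat P Cbar" using mean unfolding is_wasserstein_mean_def by simp
  have Cbc: "Cbar \<in> carrier_mat P P" using pd_matD(1)[OF Cb] .
  have CbD: "(A * Jm P j * transpose_mat A) * Cbar * (A * Jm P j * transpose_mat A) = Cbar" if j: "j < Q" for j
  proof -
    note df = D_facts[OF assms(4), of j]
    have "(A * Jm P j * transpose_mat A) * C i * (A * Jm P j * transpose_mat A) = C i" if i: "i < N" for i
    proof -
      have Ec: "block_E P Q (p i) (Nm i) \<in> carrier_mat P P"
        using pd_matD(1)[OF block_E_pd[OF PQ _ assms(6)[OF i]]] assms(5)[OF i] by blast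
      show ?thesis unfolding C_def using DXD[OF assms(4) Ec, of j] JEJ[OF PQ Nc[OF i] j] by simp
    qed
    thus ?thesis using mean_sym[OF mean assms(3) Cpd df] by blast
  qed
  have YbTc: "transpose_mat Ybar \<in> carrier_mat P P" using assms(8) by simp
  have injY: "x = 0\<^sub>v P" if x: "x \<in> carrier_vec P" and Yx: "transpose_mat Ybar *\<^sub>v x = 0\<^sub>v P" for x
  proof (rule ccontr)
    assume x0: "x \<noteq> 0\<^sub>v P"
    have "Cbar *\<^sub>v x = Ybar *\<^sub>v (transpose_mat Ybar *\<^sub>v x)"
      unfolding assms(9)[symmetric] using assms(8) x by (intro assoc_mult_mat_vec[of _ P P _ P]) auto
    hence "Cbar *\<^sub>v x = 0\<^sub>v P" using Yx assms(8) by simp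
    thus False using pd_matD(3)[OF Cb x x0] x by simp
  qed
  obtain W where Wc: "W \<in> carrier_mat P P" and YW: "transpose_mat Ybar * W = 1\<^sub>m P"
    and WY: "W * transpose_mat Ybar = 1\<^sub>m P" using inv_exists[OF YbTc injY] by blast
  define Bm where "Bm = transpose_mat A * Cbar * A"
  have injA: "x = 0\<^sub>v P" if x: "x \<in> carrier_vec P" and Ax: "A *\<^sub>v x = 0\<^sub>v P" for x
  proof -
    have "x = (transpose_mat A * A) *\<^sub>v x" using a x by simp
    also have "\<dots> = transpose_mat A *\<^sub>v (A *\<^sub>v x)" using a x by (intro assoc_mult_mat_vec[of _ P P _ P]) auto
    finally show ?thesis using Ax a by simp
  qed
  have Bp: "pd_mat P Bm" unfolding Bm_def using pd_congr[OF Cb a(1) injA] .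
  have Bmc: "Bm \<in> carrier_mat P P" using pd_matD(1)[OF Bp] .
  have bpos: "Bm $$ (j,j) > 0" if j: "j < P" for j
    using diag_entry_qf[OF Bmc j] pd_matD(3)[OF Bp, of "unit_vec P j"] j by simp
  define G where "G = transpose_mat Ybar * A"
  have Gc: "G \<in> carrier_mat P P" unfolding G_def using YbTc a by simp
  define w where "w = (\<lambda>x y. \<Sum>j<Q. (\<alpha> j / sqrt (Bm $$ (j,j))) * A $$ (x,j) * G $$ (y,j))"
  define \<beta> where "\<beta> = vec (P * P) (\<lambda>k. w (k div P) (k mod P))"
  define c where "c = (\<Sum>x<P. \<Sum>y<P. w x y * Ybar $$ (x,y))"
  have "\<forall>i<N. (\<Sum>j<Q. \<alpha> j * sqrt (p i j))
           = \<beta> \<bullet> mvec (Y i * (V i * transpose_mat (U i)) - Ybar) + c"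
  proof (intro allI impI)
    fix i assume i: "i < N"
    define M where "M = Y i * (V i * transpose_mat (U i))"
    have Mc: "M \<in> carrier_mat P P" unfolding M_def
      using assms(10)[OF i] orthF(1,2)[OF assms(12)[OF i]] orthF(1)[OF assms(13)[OF i]] by simp
    have ent: "(transpose_mat A * M * G) $$ (j,j) = sqrt (p i j) * sqrt (Bm $$ (j,j))" if j: "j < Q" for j
      unfolding M_def G_def Bm_def
      using assms(14)[OF i]
      by (intro per_i[OF assms(4) PQ Cb assms(8) assms(9) Wc YW WY assms(10)[OF i] Nc[OF i]
            assms(11)[OF i] assms(12)[OF i] assms(13)[OF i] _ _ _ assms(15)[OF i] CbD j]) auto
    have "(\<Sum>j<Q. \<alpha> j * sqrt (p i j)) = (\<Sum>j<Q. (\<alpha> j / sqrt (Bm $$ (j,j))) * (transpose_mat A * M * G) $$ (j,j))"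
    proof (intro sum.cong refl)
      fix j assume "j \<in> {..<Q}"
      hence j: "j < Q" and jP: "j < P" using PQ by auto
      show "\<alpha> j * sqrt (p i j) = (\<alpha> j / sqrt (Bm $$ (j,j))) * (transpose_mat A * M * G) $$ (j,j)"
        unfolding ent[OF j] using bpos[OF jP] by simp
    qed
    also have "\<dots> = (\<Sum>j<Q. \<Sum>x<P. \<Sum>y<P. (\<alpha> j / sqrt (Bm $$ (j,j))) * A $$ (x,j) * G $$ (y,j) * M $$ (x,y))"
    proof (intro sum.cong refl)
      fix j assume "j \<in> {..<Q}"
      hence jP: "j < P" using PQ by auto
      show "(\<alpha> j / sqrt (Bm $$ (j,j))) * (transpose_mat A * M * G) $$ (j,j) =
          (\<Sum>x<P. \<Sum>y<P. (\<alpha> j / sqrt (Bm $$ (j,j))) * A $$ (x,j) * G $$ (y,j) * M $$ (x,y))"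
        unfolding triple_entry[OF a(2) Mc Gc jP] using a(1) jP
        by (simp add: sum_distrib_left ac_simps)
    qed
    also have "\<dots> = (\<Sum>x<P. \<Sum>j<Q. \<Sum>y<P. (\<alpha> j / sqrt (Bm $$ (j,j))) * A $$ (x,j) * G $$ (y,j) * M $$ (x,y))"
      by (rule sum.swap)
    also have "\<dots> = (\<Sum>x<P. \<Sum>y<P. \<Sum>j<Q. (\<alpha> j / sqrt (Bm $$ (j,j))) * A $$ (x,j) * G $$ (y,j) * M $$ (x,y))"
      by (rule sum.cong[OF refl], rule sum.swap)
    also have "\<dots> = (\<Sum>x<P. \<Sum>y<P. w x y * M $$ (x,y))"
      unfolding w_def by (simp add: sum_distrib_right)
    also have "\<dots> = \<beta> \<bullet> mvec (M - Ybar) + c"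
      unfolding \<beta>_def c_def using lin_repr[OF Mc assms(8), of w] by simp
    finally show "(\<Sum>j<Q. \<alpha> j * sqrt (p i j)) = \<beta> \<bullet> mvec (Y i * (V i * transpose_mat (U i)) - Ybar) + c"
      unfolding M_def .
  qed
  moreover have "\<beta> \<in> carrier_vec (P * P)" unfolding \<beta>_def by simp
  ultimately show ?thesis by blast
qed


end
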